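(* Let $r\ge1$ and let $[x,y]_r$ be a nonempty interval in the $r$-Bruhat order on $\mathcal S_\infty$. Let $k$ be such that $x(\alpha)=y(\alpha)=\alpha$ for all $\alpha>k+1$, with $r\le k$. Write $x_j=x(j)$ for $1\le j\le k+1$. Let $\alpha_1<\cdots<\alpha_\ell<r<\beta_1<\cdots<\beta_t<k+1$ be the positions $p\in\{1,\dots,k\}\setminus\{r\}$ with $x_p>x_{p+1}$; set $\alpha_0=0$, $\alpha_{\ell+1}=r$, $\beta_0=r$, $\beta_{t+1}=k+1$, and let $A_i=\{\alpha_{i-1}+1,\dots,\alpha_i\}$ ($1\le i\le \ell+1$), $B_m=\{\beta_{m-1}+1,\dots,\beta_m\}$ ($1\le m\le t+1$). For $j\in B_m$ put $p_j=x_j-(m-1)(k+1)$ and for $j\in A_i$ put $p_j=x_j+(\ell+2-i)(k+1)$. Listing the indices $j$ in the order $B_{t+1},B_t,\dots,B_1,A_{\ell+1},A_\ell,\dots,A_1$, each block in increasing order of $j$, assign the values $1,2,\dots,k+1$ successively, i.e. set $u'(p_j)$ equal to the rank of $j$ in this list; extend to $u':\mathbb Z\to\mathbb Z$ by $u'(p_j+m(k+1))=u'(p_j)+m(k+1)$. Let $s\in\mathbb Z$ be such that $\sum_{i=1}^{k+1}u'(i)=\binom{k+2}{2}-s(k+1)$ and define $u(i)=u'(i+s)$ for all $i\in\mathbb Z$; then $u\in W^0$. Now let $x=x^0\lessdot_r x^1\lessdot_r\cdots\lessdot_r x^n=y$ be any maximal chain in $[x,y]_r$, with $x^i=(a_i,b_i)\,x^{i-1}$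 and $a_i<b_i$. Then $u\,\mathbf{t}_{a_1-s,b_1-s}\mathbf{t}_{a_2-s,b_2-s}\cdots\mathbf{t}_{a_n-s,b_n-s}\neq0$, i.e. $\mathbf{t}_{a_1-s,b_1-s}\cdots\mathbf{t}_{a_n-s,b_n-s}$ is a nonzero maximal chain in the affine $0$-Bruhat graph in the interval from $u$ to $u\,\mathbf{t}_{a_1-s,b_1-s}\cdots\mathbf{t}_{a_n-s,b_n-s}$.
   Context: $\mathcal S_\infty$ is the group of permutations of the positive integers fixing all but finitely many; $\ell$ denotes length (number of inversions). For $r\ge1$, the $r$-Bruhat order $\le_r$ on $\mathcal S_\infty$ is the transitive closure of the covers $u\lessdot_r w$, meaning $\ell(w)=\ell(u)+1$ and $u^{-1}w=(i,j)$ is a transposition with $i\le r<j$; for such a cover one writes $wu^{-1}=(a,b)$ with $a<b$, so $w=(a,b)u$. $[x,y]_r$ is the set of elements between $x$ and $y$ in this order. Affine side: $W$ is the group of bijections $u:\mathbb Z\to\mathbb Z$ with $u(i+k+1)=u(i)+k+1$ and $u(1)+\cdots+u(k+1)=\binom{k+2}2$, with product $(uw)(i)=u(w(i))$ and Coxeter length $\ell$ with respect to the generators $s_0,\dots,s_k$ ($s_i$ swaps $i+m(k+1)$ and $i+1+m(k+1)$ for all $m$). $W^0$ is the set of $u\in W$ with $u^{-1}(1)<\cdots<u^{-1}(k+1)$. For $a<b$ with $b-a\le k$, $t_{a,b}\in W$ swaps $a+m(k+1)$ and $b+m(k+1)$ for all $m$. The operator $\mathbf{t}_{ab}$ acts on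 the right on $\mathbb ZW$ by $u\,\mathbf{t}_{ab}=ut_{a,b}$ if $\ell(ut_{a,b})=\ell(u)+1$ and $u(a)\le0<u(b)$, and $0$ otherwise (with $0\,\mathbf{t}_{cd}=0$). The affine $0$-Bruhat graph is the directed multigraph on $W$ with an edge $u\to u\,\mathbf{t}_{ab}$ (labelled $b$) for each nonzero $u\,\mathbf{t}_{ab}$. *)

theory Defs
  imports Main
begin

text \<open>Elements of S_infinity are represented as bijections of nat fixing 0
  (hence bijections of the positive integers) and fixing all but finitely many points.\<close>

definition Sinf :: "(nat \<Rightarrow> nat) set" where
  "Sinf = {f. bij f \<and> f 0 = 0 \<and> finite {i. f i \<noteq> i}}"

definition inv_len :: "(nat \<Rightarrow> nat) \<Rightarrow> nat" where
  "inv_len f = card {(i, j). 0 < i \<and> i < j \<and> f j < f i}"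

definition transp_nat :: "nat \<Rightarrow> nat \<Rightarrow> nat \<Rightarrow> nat" where
  "transp_nat i j = (\<lambda>m. if m = i then j else if m = j then i else m)"

definition rcover :: "nat \<Rightarrow> (nat \<Rightarrow> nat) \<Rightarrow> (nat \<Rightarrow> nat) \<Rightarrow> bool" where
  "rcover r u w \<longleftrightarrow> u \<in> Sinf \<and> w \<in> Sinf \<and> inv_len w = inv_len u + 1 \<and>
     (\<exists>i j. 1 \<le> i \<and> i \<le> r \<and> r < j \<and> w = u \<circ> transp_nat i j)"

definition rle :: "nat \<Rightarrow> (nat \<Rightarrow> nat) \<Rightarrow> (nat \<Rightarrow> nat) \<Rightarrow> bool" where
  "rle r = (rcover r)\<^sup>*\<^sup>*"

definition affW :: "nat \<Rightarrow> (int \<Rightarrow> int) set" where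
  "affW k = {u. bij u \<and> (\<forall>i. u (i + int k + 1) = u i + int k + 1) \<and>
                (\<Sum>i = 1..int k + 1. u i) = int ((k + 2) choose 2)}"

definition aff_s :: "nat \<Rightarrow> nat \<Rightarrow> int \<Rightarrow> int" where
  "aff_s k i = (\<lambda>z. if z mod (int k + 1) = int i mod (int k + 1) then z + 1
                   else if z mod (int k + 1) = (int i + 1) mod (int k + 1) then z - 1
                   else z)"

definition aff_len :: "nat \<Rightarrow> (int \<Rightarrow> int) \<Rightarrow> nat" where
  "aff_len k u = (LEAST n. \<exists>ws. length ws = n \<and> (\<forall>i\<in>set ws. i \<le> k) \<and>
                      u = foldr (\<lambda>i f. aff_s k i \<circ> f) ws id)"

definition affW0 :: "nat \<Rightarrow> (int \<Rightarrow> int) set" where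
  "affW0 k = {u \<in> affW k. \<forall>i j. 1 \<le> i \<and> i < j \<and> j \<le> int k + 1 \<longrightarrow> inv u i < inv u j}"

text \<open>t_{a,b} swaps a+m(k+1) and b+m(k+1) for all m (meaningful for a < b, b - a <= k).\<close>
definition aff_t :: "nat \<Rightarrow> int \<Rightarrow> int \<Rightarrow> int \<Rightarrow> int" where
  "aff_t k a b = (\<lambda>z. if z mod (int k + 1) = a mod (int k + 1) then z + (b - a)
                     else if z mod (int k + 1) = b mod (int k + 1) then z - (b - a)
                     else z)"

text \<open>Right action of the operator t_{ab} on ZW restricted to basis elements and 0;
  None represents 0.\<close>
definition tmul :: "nat \<Rightarrow> (int \<Rightarrow> int) option \<Rightarrow> int \<Rightarrow> int \<Rightarrow> (int \<Rightarrow> int) option" where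
  "tmul k uo a b = (case uo of None \<Rightarrow> None
     | Some u \<Rightarrow> if a < b \<and> b - a \<le> int k \<and>
                     aff_len k (u \<circ> aff_t k a b) = aff_len k u + 1 \<and> u a \<le> 0 \<and> 0 < u b
                  then Some (u \<circ> aff_t k a b) else None)"

definition desc :: "(nat \<Rightarrow> nat) \<Rightarrow> nat \<Rightarrow> nat \<Rightarrow> nat set" where
  "desc x k r = {p. 1 \<le> p \<and> p \<le> k \<and> p \<noteq> r \<and> x (p + 1) < x p}"

definition nA :: "(nat \<Rightarrow> nat) \<Rightarrow> nat \<Rightarrow> nat \<Rightarrow> nat" where
  "nA x k r = card {d \<in> desc x k r. d < r}"

definition nB :: "(nat \<Rightarrow> nat) \<Rightarrow> nat \<Rightarrow> nat \<Rightarrow> nat" where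
  "nB x k r = card {d \<in> desc x k r. r < d}"

definition alpha :: "(nat \<Rightarrow> nat) \<Rightarrow> nat \<Rightarrow> nat \<Rightarrow> nat \<Rightarrow> nat" where
  "alpha x k r i = (if i = 0 then 0
     else if i \<le> nA x k r then sorted_list_of_set {d \<in> desc x k r. d < r} ! (i - 1)
     else r)"

definition beta :: "(nat \<Rightarrow> nat) \<Rightarrow> nat \<Rightarrow> nat \<Rightarrow> nat \<Rightarrow> nat" where
  "beta x k r m = (if m = 0 then r
     else if m \<le> nB x k r then sorted_list_of_set {d \<in> desc x k r. r < d} ! (m - 1)
     else k + 1)"

definition blockA :: "(nat \<Rightarrow> nat) \<Rightarrow> nat \<Rightarrow> nat \<Rightarrow> nat \<Rightarrow> nat set" where
  "blockA x k r i = {alpha x k r (i - 1) + 1 .. alpha x k r i}"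

definition blockB :: "(nat \<Rightarrow> nat) \<Rightarrow> nat \<Rightarrow> nat \<Rightarrow> nat \<Rightarrow> nat set" where
  "blockB x k r m = {beta x k r (m - 1) + 1 .. beta x k r m}"

definition ppos :: "(nat \<Rightarrow> nat) \<Rightarrow> nat \<Rightarrow> nat \<Rightarrow> nat \<Rightarrow> int" where
  "ppos x k r j =
     (if j \<le> r then
        int (x j) + (int (nA x k r) + 2 - int (THE i. 1 \<le> i \<and> i \<le> nA x k r + 1 \<and> j \<in> blockA x k r i)) * (int k + 1)
      else
        int (x j) - (int (THE m. 1 \<le> m \<and> m \<le> nB x k r + 1 \<and> j \<in> blockB x k r m) - 1) * (int k + 1))"

definition order_list :: "(nat \<Rightarrow> nat) \<Rightarrow> nat \<Rightarrow> nat \<Rightarrow> nat list" where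
  "order_list x k r =
     concat (map (\<lambda>m. [beta x k r (m - 1) + 1 ..< beta x k r m + 1]) (rev [1 ..< nB x k r + 2]))
   @ concat (map (\<lambda>i. [alpha x k r (i - 1) + 1 ..< alpha x k r i + 1]) (rev [1 ..< nA x k r + 2]))"

definition apply_chain :: "nat \<Rightarrow> (int \<Rightarrow> int) \<Rightarrow> int list \<Rightarrow> int list \<Rightarrow> (int \<Rightarrow> int) option" where
  "apply_chain k u as bs = foldl (\<lambda>acc (a, b). tmul k acc a b) (Some u) (zip as bs)"

end

theory Submission
  imports Defs
begin


abbreviation NN :: "nat \<Rightarrow> int" where "NN k \<equiv> int k + 1"

lemma per_mult:
  fixes f :: "int \<Rightarrow> int" and N :: int
  assumes "\<forall>y. f (y + N) = f y + N"
  shows "f (y + m * N) = f y + m * N"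
proof (induction m rule: int_induct[where k=0])
  case base then show ?case by simp
next
  case (step1 i)
  have "f (y + (i + 1) * N) = f ((y + i * N) + N)" by (simp add: algebra_simps)
  also have "\<dots> = f (y + i*N) + N" using assms by blast
  finally show ?case using step1 by (simp add: algebra_simps)
next
  case (step2 i)
  have "f (y + i * N) = f ((y + (i - 1) * N) + N)" by (simp add: algebra_simps)
  also have "\<dots> = f (y + (i - 1)*N) + N" using assms by blast
  finally show ?case using step2 by (simp add: algebra_simps)
qed

definition Rep :: "nat \<Rightarrow> (int \<Rightarrow> int) \<Rightarrow> (nat \<Rightarrow> int) \<Rightarrow> (nat \<Rightarrow> int) \<Rightarrow> bool" where
  "Rep k f g h \<longleftrightarrow> (\<forall>\<alpha>\<in>{1..Suc k}. \<forall>m. f (g \<alpha> + m * NN k) = h \<alpha> + m * NN k)"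

lemma RepD: "Rep k f g h \<Longrightarrow> \<alpha> \<in> {1..Suc k} \<Longrightarrow> f (g \<alpha> + m * NN k) = h \<alpha> + m * NN k"
  unfolding Rep_def by blast

definition resinj :: "nat \<Rightarrow> (nat \<Rightarrow> int) \<Rightarrow> bool" where
  "resinj k g \<longleftrightarrow> inj_on (\<lambda>\<alpha>. g \<alpha> mod NN k) {1..Suc k}"

lemma mod_range: "(z::int) mod NN k \<in> {0..<NN k}"
proof -
  have "NN k > 0" by simp
  then show ?thesis using pos_mod_bound pos_mod_sign by (metis atLeastLessThan_iff)
qed

lemma resinj_img:
  assumes "resinj k g"
  shows "(\<lambda>\<alpha>. g \<alpha> mod NN k) ` {1..Suc k} = {0..<NN k}"
proof -
  have sub: "(\<lambda>\<alpha>. g \<alpha> mod NN k) ` {1..Suc k} \<subseteq> {0..<NN k}" using mod_range by blast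
  have "card ((\<lambda>\<alpha>. g \<alpha> mod NN k) ` {1..Suc k}) = Suc k"
    using assms unfolding resinj_def by (simp add: card_image)
  moreover have "card {0..<NN k} = Suc k" by simp
  ultimately show ?thesis using sub by (metis card_subset_eq finite_atLeastLessThan_int)
qed

lemma resinj_surj:
  assumes "resinj k g"
  shows "\<exists>\<alpha>\<in>{1..Suc k}. \<exists>m. y = g \<alpha> + m * NN k"
proof -
  have "y mod NN k \<in> {0..<NN k}" by (rule mod_range)
  then obtain \<alpha> where a: "\<alpha> \<in> {1..Suc k}" "g \<alpha> mod NN k = y mod NN k"
    using resinj_img[OF assms] by (metis (no_types, lifting) imageE)
  have e1: "y div NN k * NN k + y mod NN k = y" by (rule div_mult_mod_eq)
  have e2: "g \<alpha> div NN k * NN k + g \<alpha> mod NN k = g \<alpha>" by (rule div_mult_mod_eq)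
  have "y = g \<alpha> + (y div NN k - g \<alpha> div NN k) * NN k"
    using a(2) e1 e2 by (simp add: left_diff_distrib)
  then show ?thesis using a(1) by blast
qed

lemma resinj_uniq:
  assumes "resinj k g" "\<alpha>1 \<in> {1..Suc k}" "\<alpha>2 \<in> {1..Suc k}"
    "g \<alpha>1 + m1 * NN k = g \<alpha>2 + m2 * NN k"
  shows "\<alpha>1 = \<alpha>2 \<and> m1 = m2"
proof -
  have "(g \<alpha>1 + m1 * NN k) mod NN k = (g \<alpha>2 + m2 * NN k) mod NN k"
    using assms(4) by simp
  then have "g \<alpha>1 mod NN k = g \<alpha>2 mod NN k" by simp
  then have "\<alpha>1 = \<alpha>2" using assms(1-3) unfolding resinj_def inj_on_def by blast
  then show ?thesis using assms(4) by simp
qed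

lemma Rep_per:
  assumes "Rep k f g h" "resinj k g"
  shows "f (y + NN k) = f y + NN k"
proof -
  obtain \<alpha> m where a: "\<alpha> \<in> {1..Suc k}" "y = g \<alpha> + m * NN k" using resinj_surj[OF assms(2)] by blast
  have "f (y + NN k) = f (g \<alpha> + (m+1) * NN k)" using a by (simp add: algebra_simps)
  also have "\<dots> = h \<alpha> + (m+1) * NN k" using RepD[OF assms(1) a(1)] by blast
  also have "\<dots> = f y + NN k" using RepD[OF assms(1) a(1), of m] a(2) by (simp add: algebra_simps)
  finally show ?thesis .
qed

lemma Rep_bij:
  assumes "Rep k f g h" "resinj k g" "resinj k h"
  shows "bij f"
proof (rule bijI)
  show "inj f"
  proof (rule injI)
    fix y1 y2 assume eq: "f y1 = f y2"
    obtain \<alpha>1 m1 where a1: "\<alpha>1 \<in> {1..Suc k}" "y1 = g \<alpha>1 + m1 * NN k" using resinj_surj[OF assms(2)] by blast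
    obtain \<alpha>2 m2 where a2: "\<alpha>2 \<in> {1..Suc k}" "y2 = g \<alpha>2 + m2 * NN k" using resinj_surj[OF assms(2)] by blast
    have "f y1 = h \<alpha>1 + m1 * NN k" using RepD[OF assms(1) a1(1)] a1(2) by blast
    moreover have "f y2 = h \<alpha>2 + m2 * NN k" using RepD[OF assms(1) a2(1)] a2(2) by blast
    ultimately have "h \<alpha>1 + m1 * NN k = h \<alpha>2 + m2 * NN k" using eq by simp
    then have "\<alpha>1 = \<alpha>2 \<and> m1 = m2" using resinj_uniq[OF assms(3) a1(1) a2(1)] by blast
    then show "y1 = y2" using a1 a2 by simp
  qed
  show "surj f"
  proof -
    { fix v
      obtain \<alpha> m where a: "\<alpha> \<in> {1..Suc k}" "v = h \<alpha> + m * NN k" using resinj_surj[OF assms(3)] by blast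
      then have "v = f (g \<alpha> + m * NN k)" using RepD[OF assms(1) a(1)] by simp
      then have "v \<in> range f" by blast }
    then show ?thesis by blast
  qed
qed



definition affinv :: "nat \<Rightarrow> (int \<Rightarrow> int) \<Rightarrow> nat" where
  "affinv k f = card {(p,q). 1 \<le> p \<and> p \<le> NN k \<and> p < q \<and> f q < f p}"

definition cross :: "nat \<Rightarrow> (nat \<Rightarrow> int) \<Rightarrow> (nat \<Rightarrow> int) \<Rightarrow> nat" where
  "cross k g h = card {(\<alpha>,\<beta>). \<alpha> \<in> {1..Suc k} \<and> \<beta> \<in> {1..Suc k} \<and> g \<alpha> < g \<beta> \<and> h \<beta> < h \<alpha>}"

definition Cc :: "nat \<Rightarrow> (nat \<Rightarrow> int) \<Rightarrow> nat" where
  "Cc k h = (\<Sum>\<alpha>\<in>{1..Suc k}. \<Sum>\<beta>\<in>{1..Suc k}. card {m::int. 0 < m * NN k \<and> m * NN k < h \<alpha> - h \<beta>})"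

definition win :: "nat \<Rightarrow> int \<Rightarrow> (nat \<Rightarrow> int) \<Rightarrow> bool" where
  "win k w g \<longleftrightarrow> (\<forall>\<alpha>\<in>{1..Suc k}. w < g \<alpha> \<and> g \<alpha> \<le> w + NN k) \<and> inj_on g {1..Suc k}"

lemma win_resinj:
  assumes "win k w g" shows "resinj k g"
  unfolding resinj_def inj_on_def
proof (intro ballI impI)
  fix a1 a2 assume a: "a1 \<in> {1..Suc k}" "a2 \<in> {1..Suc k}" "g a1 mod NN k = g a2 mod NN k"
  have r1: "w < g a1" "g a1 \<le> w + NN k" "w < g a2" "g a2 \<le> w + NN k" using assms a unfolding win_def by auto
  have "(g a1 - (w + 1)) mod NN k = g a1 - (w + 1)" using r1 by (intro mod_pos_pos_trivial) auto
  moreover have "(g a2 - (w + 1)) mod NN k = g a2 - (w + 1)" using r1 by (intro mod_pos_pos_trivial) auto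
  moreover have "(g a1 - (w + 1)) mod NN k = (g a1 mod NN k - (w + 1)) mod NN k"
    by (simp add: mod_diff_left_eq)
  moreover have "(g a2 - (w + 1)) mod NN k = (g a2 mod NN k - (w + 1)) mod NN k"
    by (simp add: mod_diff_left_eq)
  ultimately have "g a1 = g a2" using a(3) by simp
  then show "a1 = a2" using assms a unfolding win_def inj_on_def by blast
qed

lemma finite_mset: "finite {m::int. d < m * NN k \<and> m * NN k < e}"
proof -
  have "{m::int. d < m * NN k \<and> m * NN k < e} \<subseteq> {min d 0 .. max e 0}"
  proof
    fix m assume "m \<in> {m::int. d < m * NN k \<and> m * NN k < e}"
    then have h: "d < m * NN k" "m * NN k < e" by auto
    show "m \<in> {min d 0 .. max e 0}"
    proof (cases "m \<ge> 0")
      case True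
      then have "m \<le> m * NN k" by (simp add: mult_le_cancel_left1)
      then have "m < e" using h(2) by (rule le_less_trans)
      then show ?thesis using True by simp
    next
      case False
      then have "m * NN k \<le> m" by (simp add: mult_le_cancel_left2)
      have "d < m" using h(1) \<open>m * NN k \<le> m\<close> by (rule less_le_trans)
      then show ?thesis using False by simp
    qed
  qed
  then show ?thesis by (rule finite_subset) simp
qed

lemma pos_iff: "0 < m * NN k \<longleftrightarrow> 0 < (m::int)"
  by (simp add: zero_less_mult_iff)

lemma card_mset_split:
  assumes "- NN k < d" "d < NN k"
  shows "card {m::int. d < m * NN k \<and> m * NN k < e} =
         card {m::int. 0 < m * NN k \<and> m * NN k < e} + (if d < 0 \<and> 0 < e then 1 else 0)"
proof (cases "d < 0")
  case True
  have eq: "{m::int. d < m * NN k \<and> m * NN k < e} = {m. 0 \<le> m \<and> m * NN k < e}"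
  proof (safe)
    fix m assume "d < m * NN k" show "0 \<le> m"
    proof (rule ccontr)
      assume "\<not> 0 \<le> m" then have "m \<le> -1" by simp
      then have "m * NN k \<le> -1 * NN k" by (intro mult_right_mono) auto
      then show False using \<open>d < m * NN k\<close> assms by simp
    qed
  next
    fix m :: int assume "0 \<le> m" then have "0 \<le> m * NN k" by simp
    then show "d < m * NN k" using True by linarith
  qed
  show ?thesis
  proof (cases "0 < e")
    case True
    have "{m. 0 \<le> m \<and> m * NN k < e} = insert 0 {m::int. 0 < m * NN k \<and> m * NN k < e}"
      using True by (auto simp: pos_iff)
    then show ?thesis using eq \<open>d<0\<close> True finite_mset[of 0 k e] by simp
  next
    case False
    have "{m. 0 \<le> m \<and> m * NN k < e} = {m::int. 0 < m * NN k \<and> m * NN k < e}"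
      using False by (auto simp: pos_iff le_less)
    then show ?thesis using eq False by simp
  qed
next
  case False
  have "{m::int. d < m * NN k \<and> m * NN k < e} = {m::int. 0 < m * NN k \<and> m * NN k < e}"
  proof (safe)
    fix m assume "d < m * NN k" show "0 < m * NN k"
    proof (rule ccontr)
      assume "\<not> 0 < m * NN k" then show False using \<open>d < m * NN k\<close> False by simp
    qed
  next
    fix m :: int assume "0 < m * NN k" then have "1 \<le> m" by (simp add: zero_less_mult_iff)
    then have "1 * NN k \<le> m * NN k" by (intro mult_right_mono) auto
    then have "NN k \<le> m * NN k" by simp
    then show "d < m * NN k" using assms(2) by (rule less_le_trans[rotated])
  qed
  then show ?thesis using False by simp
qed



lemma div_shift: "(x + m * NN k) div NN k = x div NN k + (m::int)"
  by simp

lemma affinv_formula: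
  assumes R: "Rep k f g h" and W: "win k w g" and Hr: "resinj k h"
  shows "affinv k f = Cc k h + cross k g h"
proof -
  define N where "N = NN k"
  define A where "A = {1..Suc k}"
  have Npos: "N > 0" unfolding N_def by simp
  have Gr: "resinj k g" using W by (rule win_resinj)
  define sh where "sh \<alpha> = (g \<alpha> - 1) div N" for \<alpha>
  define S where "S = {(p,q). 1 \<le> p \<and> p \<le> N \<and> p < q \<and> f q < f p}"
  define B where "B = (\<lambda>(\<alpha>,\<beta>). {m::int. g \<alpha> - g \<beta> < m * N \<and> m * N < h \<alpha> - h \<beta>})"
  define T where "T = Sigma (A \<times> A) B"
  define \<phi> where "\<phi> = (\<lambda>((\<alpha>::nat,\<beta>::nat),m::int). (g \<alpha> - sh \<alpha> * N, g \<beta> + (m - sh \<alpha>) * N))"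
  have fB: "finite (B x)" for x unfolding B_def N_def by (cases x) (simp add: finite_mset)
  have fA: "finite A" unfolding A_def by simp
  have pwin: "1 \<le> g \<alpha> - sh \<alpha> * N \<and> g \<alpha> - sh \<alpha> * N \<le> N" for \<alpha>
  proof -
    have "(g \<alpha> - 1) - (g \<alpha> - 1) div N * N = (g \<alpha> - 1) mod N" by (rule minus_div_mult_eq_mod)
    then have "g \<alpha> - sh \<alpha> * N = (g \<alpha> - 1) mod N + 1" unfolding sh_def by linarith
    moreover have "0 \<le> (g \<alpha> - 1) mod N" "(g \<alpha> - 1) mod N < N" using Npos by auto
    ultimately show ?thesis by simp
  qed
  have Rf: "\<alpha> \<in> A \<Longrightarrow> f (g \<alpha> + m * N) = h \<alpha> + m * N" for \<alpha> m
    using RepD[OF R] unfolding A_def N_def by blast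
  have inj: "inj_on \<phi> T"
  proof (rule inj_onI)
    fix X Y assume X: "X \<in> T" and Y: "Y \<in> T" and eq: "\<phi> X = \<phi> Y"
    obtain a1 b1 m1 where x: "X = ((a1,b1),m1)" by (metis prod.exhaust)
    obtain a2 b2 m2 where y: "Y = ((a2,b2),m2)" by (metis prod.exhaust)
    have mem: "a1 \<in> A" "b1 \<in> A" "a2 \<in> A" "b2 \<in> A" using X Y x y unfolding T_def by auto
    have e1: "g a1 + (- sh a1) * N = g a2 + (- sh a2) * N" using eq x y unfolding \<phi>_def by simp
    have "a1 = a2" using resinj_uniq[OF Gr, of a1 a2] e1 mem unfolding A_def N_def by blast
    then have e2: "g b1 + (m1 - sh a1) * N = g b2 + (m2 - sh a1) * N" using eq x y unfolding \<phi>_def by simp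
    have "b1 = b2 \<and> m1 - sh a1 = m2 - sh a1" using resinj_uniq[OF Gr, of b1 b2] e2 mem unfolding A_def N_def by blast
    then show "X = Y" using x y \<open>a1 = a2\<close> by simp
  qed
  have img: "\<phi> ` T = S"
  proof
    show "\<phi> ` T \<subseteq> S"
    proof
      fix Z assume "Z \<in> \<phi> ` T"
      then obtain a b m where mem: "a \<in> A" "b \<in> A" "m \<in> B (a,b)" and Z: "Z = \<phi> ((a,b),m)"
        unfolding T_def by auto
      have c: "g a - g b < m * N" "m * N < h a - h b" using mem(3) unfolding B_def by auto
      have f1: "f (g a - sh a * N) = h a - sh a * N" using Rf[OF mem(1), of "- sh a"] by simp
      have f2: "f (g b + (m - sh a) * N) = h b + (m - sh a) * N" using Rf[OF mem(2)] by simp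
      have "g a - sh a * N < g b + (m - sh a) * N" using c(1) by (simp add: algebra_simps)
      moreover have "h b + (m - sh a) * N < h a - sh a * N" using c(2) by (simp add: algebra_simps)
      ultimately show "Z \<in> S" using Z pwin[of a] f1 f2 unfolding S_def \<phi>_def by simp
    qed
  next
    show "S \<subseteq> \<phi> ` T"
    proof
      fix Z assume "Z \<in> S"
      then obtain p q where Z: "Z = (p,q)" and pq: "1 \<le> p" "p \<le> N" "p < q" "f q < f p"
        unfolding S_def by auto
      obtain a m0 where a: "a \<in> A" "p = g a + m0 * N" using resinj_surj[OF Gr, of p] unfolding A_def N_def by blast
      obtain b m1 where b: "b \<in> A" "q = g b + m1 * N" using resinj_surj[OF Gr, of q] unfolding A_def N_def by blast
      have "(p - 1) div N = 0" using pq by (simp add: div_pos_pos_trivial)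
      moreover have "(p - 1) div N = (g a - 1) div N + m0"
        using a(2) div_shift[of "g a - 1" m0 k] unfolding N_def by (simp add: algebra_simps)
      ultimately have m0: "m0 = - sh a" unfolding sh_def by simp
      define m where "m = m1 + sh a"
      have fp: "f p = h a + m0 * N" using Rf[OF a(1)] a(2) by simp
      have fq: "f q = h b + m1 * N" using Rf[OF b(1)] b(2) by simp
      have "g a - g b < m * N" using pq(3) a(2) b(2) m0 unfolding m_def by (simp add: algebra_simps)
      moreover have "m * N < h a - h b" using pq(4) fp fq m0 unfolding m_def by (simp add: algebra_simps)
      ultimately have "((a,b),m) \<in> T" using a(1) b(1) unfolding T_def B_def by simp
      moreover have "\<phi> ((a,b),m) = Z" using Z a(2) b(2) m0 unfolding \<phi>_def m_def by (simp add: algebra_simps)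
      ultimately show "Z \<in> \<phi> ` T" by force
    qed
  qed
  have "affinv k f = card S" unfolding affinv_def S_def N_def by simp
  also have "\<dots> = card T" using img inj card_image by fastforce
  also have "\<dots> = (\<Sum>x\<in>A \<times> A. card (B x))" unfolding T_def using fA fB by (simp add: card_SigmaI)
  also have "\<dots> = (\<Sum>x\<in>A \<times> A. card {m::int. 0 < m * N \<and> m * N < h (fst x) - h (snd x)} +
       (if g (fst x) < g (snd x) \<and> h (snd x) < h (fst x) then 1 else 0))"
  proof (rule sum.cong[OF refl])
    fix x assume "x \<in> A \<times> A"
    then obtain a b where x: "x = (a,b)" "a \<in> A" "b \<in> A" by auto
    have "w < g a" "g a \<le> w + N" "w < g b" "g b \<le> w + N" using W x unfolding win_def A_def N_def by auto
    then have "- NN k < g a - g b" "g a - g b < NN k" unfolding N_def by auto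
    from card_mset_split[OF this, of "h a - h b"] show "card (B x) = card {m::int. 0 < m * N \<and> m * N < h (fst x) - h (snd x)} +
       (if g (fst x) < g (snd x) \<and> h (snd x) < h (fst x) then 1 else 0)"
      using x unfolding B_def N_def by simp
  qed
  also have "\<dots> = (\<Sum>x\<in>A \<times> A. card {m::int. 0 < m * N \<and> m * N < h (fst x) - h (snd x)}) +
       (\<Sum>x\<in>A \<times> A. (if g (fst x) < g (snd x) \<and> h (snd x) < h (fst x) then 1 else 0))"
    by (rule sum.distrib)
  also have "(\<Sum>x\<in>A \<times> A. card {m::int. 0 < m * N \<and> m * N < h (fst x) - h (snd x)}) = Cc k h"
    unfolding Cc_def A_def N_def sum.cartesian_product by (simp only: split_def)
  also have "(\<Sum>x\<in>A \<times> A. (if g (fst x) < g (snd x) \<and> h (snd x) < h (fst x) then 1 else 0)) = cross k g h"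
  proof -
    have "(\<Sum>x\<in>A \<times> A. (if g (fst x) < g (snd x) \<and> h (snd x) < h (fst x) then 1 else 0)) =
          card {x \<in> A \<times> A. g (fst x) < g (snd x) \<and> h (snd x) < h (fst x)}"
      using fA by (simp add: sum.If_cases Int_def conj_commute)
    also have "{x \<in> A \<times> A. g (fst x) < g (snd x) \<and> h (snd x) < h (fst x)} =
       {(\<alpha>,\<beta>). \<alpha> \<in> {1..Suc k} \<and> \<beta> \<in> {1..Suc k} \<and> g \<alpha> < g \<beta> \<and> h \<beta> < h \<alpha>}"
      unfolding A_def by auto
    finally show ?thesis unfolding cross_def .
  qed
  finally show ?thesis .
qed



definition per :: "nat \<Rightarrow> (int \<Rightarrow> int) \<Rightarrow> bool" where
  "per k f \<longleftrightarrow> (\<forall>y. f (y + NN k) = f y + NN k)"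

lemma perD: "per k f \<Longrightarrow> f (y + m * NN k) = f y + m * NN k"
  unfolding per_def by (rule per_mult)

lemma per_bij_resinj:
  assumes "per k f" "bij f" "f y1 mod NN k = f y2 mod NN k"
  shows "y1 mod NN k = y2 mod NN k"
proof -
  have "f y1 = f y2 + (f y1 div NN k - f y2 div NN k) * NN k"
  proof -
    have e1: "f y1 div NN k * NN k + f y1 mod NN k = f y1" by (rule div_mult_mod_eq)
    have e2: "f y2 div NN k * NN k + f y2 mod NN k = f y2" by (rule div_mult_mod_eq)
    show ?thesis using e1 e2 assms(3) by (simp add: left_diff_distrib)
  qed
  also have "\<dots> = f (y2 + (f y1 div NN k - f y2 div NN k) * NN k)" using perD[OF assms(1)] by simp
  finally have e: "y1 = y2 + (f y1 div NN k - f y2 div NN k) * NN k"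
    using assms(2) unfolding bij_def inj_def by blast
  have "(y2 + (f y1 div NN k - f y2 div NN k) * NN k) mod NN k = y2 mod NN k" by (rule mod_mult_self1)
  then show ?thesis using e by simp
qed

lemma per_bij_Rep:
  assumes "per k f" "bij f"
  shows "Rep k f (\<lambda>\<alpha>. int \<alpha> + c - 1) (\<lambda>\<alpha>. f (int \<alpha> + c - 1))"
    and "win k (c - 1) (\<lambda>\<alpha>. int \<alpha> + c - 1)"
    and "resinj k (\<lambda>\<alpha>. f (int \<alpha> + c - 1))"
proof -
  show "Rep k f (\<lambda>\<alpha>. int \<alpha> + c - 1) (\<lambda>\<alpha>. f (int \<alpha> + c - 1))"
    unfolding Rep_def using perD[OF assms(1)] by blast
  show W: "win k (c - 1) (\<lambda>\<alpha>. int \<alpha> + c - 1)"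
    unfolding win_def inj_on_def by auto
  show "resinj k (\<lambda>\<alpha>. f (int \<alpha> + c - 1))"
    unfolding resinj_def inj_on_def
  proof (intro ballI impI)
    fix a1 a2 assume a: "a1 \<in> {1..Suc k}" "a2 \<in> {1..Suc k}"
      "f (int a1 + c - 1) mod NN k = f (int a2 + c - 1) mod NN k"
    have "(int a1 + c - 1) mod NN k = (int a2 + c - 1) mod NN k"
      using per_bij_resinj[OF assms a(3)] .
    then show "a1 = a2" using win_resinj[OF W] a(1,2) unfolding resinj_def inj_on_def by blast
  qed
qed

lemma Rep_sum:
  assumes R: "Rep k f g h" and W: "win k w g"
  shows "(\<Sum>i = 1..NN k. f i - i) = (\<Sum>\<alpha> = 1..Suc k. h \<alpha> - g \<alpha>)"
proof -
  define N where "N = NN k"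
  define A where "A = {1..Suc k}"
  have Npos: "N > 0" unfolding N_def by simp
  have Gr: "resinj k g" using W by (rule win_resinj)
  define sh where "sh \<alpha> = (g \<alpha> - 1) div N" for \<alpha>
  define \<psi> where "\<psi> \<alpha> = g \<alpha> - sh \<alpha> * N" for \<alpha>
  have pwin: "\<psi> \<alpha> \<in> {1..N}" for \<alpha>
  proof -
    have "(g \<alpha> - 1) - (g \<alpha> - 1) div N * N = (g \<alpha> - 1) mod N" by (rule minus_div_mult_eq_mod)
    then have "g \<alpha> - sh \<alpha> * N = (g \<alpha> - 1) mod N + 1" unfolding sh_def by linarith
    moreover have "0 \<le> (g \<alpha> - 1) mod N" "(g \<alpha> - 1) mod N < N" using Npos by auto
    ultimately show ?thesis unfolding \<psi>_def by simp
  qed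
  have inj: "inj_on \<psi> A"
  proof (rule inj_onI)
    fix a1 a2 assume "a1 \<in> A" "a2 \<in> A" "\<psi> a1 = \<psi> a2"
    then show "a1 = a2" using resinj_uniq[OF Gr, of a1 a2 "- sh a1" "- sh a2"] unfolding \<psi>_def A_def N_def by simp
  qed
  have bb: "bij_betw \<psi> A {1..N}"
  proof -
    have "\<psi> ` A \<subseteq> {1..N}" using pwin by blast
    moreover have "card (\<psi> ` A) = card {1..N}" using inj card_image unfolding A_def N_def by fastforce
    ultimately have "\<psi> ` A = {1..N}" by (simp add: card_subset_eq)
    then show ?thesis using inj unfolding bij_betw_def by blast
  qed
  have "(\<Sum>i = 1..N. f i - i) = (\<Sum>\<alpha>\<in>A. f (\<psi> \<alpha>) - \<psi> \<alpha>)"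
    using sum.reindex_bij_betw[OF bb, of "\<lambda>i. f i - i"] by simp
  also have "\<dots> = (\<Sum>\<alpha>\<in>A. h \<alpha> - g \<alpha>)"
  proof (rule sum.cong[OF refl])
    fix \<alpha> assume "\<alpha> \<in> A"
    then have "f (g \<alpha> + (- sh \<alpha>) * N) = h \<alpha> + (- sh \<alpha>) * N" using RepD[OF R] unfolding A_def N_def by blast
    then show "f (\<psi> \<alpha>) - \<psi> \<alpha> = h \<alpha> - g \<alpha>" unfolding \<psi>_def by simp
  qed
  finally show ?thesis unfolding N_def A_def .
qed



lemma mod_shift_eq:
  assumes "(a + d) mod NN k = a mod NN k" "0 < d" "d < NN k"
  shows False
proof -
  have "NN k dvd (a + d) - a" using assms(1) by (simp add: mod_eq_dvd_iff)
  then have "NN k dvd d" by simp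
  then have "NN k \<le> d" using assms(2) by (simp add: zdvd_imp_le)
  then show False using assms(3) by simp
qed

lemma s_per: "aff_s k i (z + m * NN k) = aff_s k i z + m * NN k"
  unfolding aff_s_def by simp

lemma s_inv:
  assumes "1 \<le> k"
  shows "aff_s k i (aff_s k i z) = z"
proof -
  have n1: "(a + 1) mod NN k \<noteq> a mod NN k" for a
    using mod_shift_eq[of a 1 k] assms by auto
  have n2: "(a - 1) mod NN k \<noteq> a mod NN k" for a
    using n1[of "a - 1"] by auto
  show ?thesis
  proof (cases "z mod NN k = int i mod NN k")
    case True
    then have "(z + 1) mod NN k = (int i + 1) mod NN k" by (metis mod_add_left_eq)
    moreover have "(z + 1) mod NN k \<noteq> int i mod NN k" using n1[of z] True by simp
    ultimately show ?thesis using True unfolding aff_s_def by simp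
  next
    case F1: False
    show ?thesis
    proof (cases "z mod NN k = (int i + 1) mod NN k")
      case True
      then have "(z - 1) mod NN k = int i mod NN k"
        by (metis add_diff_cancel_right' mod_diff_left_eq)
      then show ?thesis using True F1 unfolding aff_s_def by simp
    next
      case False
      then show ?thesis using F1 unfolding aff_s_def by simp
    qed
  qed
qed

lemma s_bij: "1 \<le> k \<Longrightarrow> bij (aff_s k i)"
  by (metis bij_betw_def inj_on_inverseI s_inv surjI)

lemma s_perd: "per k (aff_s k i)"
  unfolding per_def using s_per[of k i _ 1] by simp

lemma per_comp: "per k f \<Longrightarrow> per k g \<Longrightarrow> per k (f \<circ> g)"
  unfolding per_def by simp

definition tau :: "nat \<Rightarrow> nat" where "tau \<alpha> = (if \<alpha> = 1 then 2 else if \<alpha> = 2 then 1 else \<alpha>)"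

lemma s_on_window:
  assumes "1 \<le> k" "\<alpha> \<in> {1..Suc k}"
  shows "aff_s k i (int \<alpha> + int i - 1) = int (tau \<alpha>) + int i - 1"
proof -
  consider "\<alpha> = 1" | "\<alpha> = 2" | "3 \<le> \<alpha>" using assms(2) by fastforce
  then show ?thesis
  proof cases
    case 1 then show ?thesis unfolding aff_s_def tau_def by simp
  next
    case 2
    have "(int i + 1) mod NN k \<noteq> int i mod NN k" using mod_shift_eq[of "int i" 1 k] assms by auto
    then show ?thesis using 2 unfolding aff_s_def tau_def by (simp add: add.commute)
  next
    case 3
    have a: "(int i + (int \<alpha> - 1)) mod NN k \<noteq> int i mod NN k"
      using mod_shift_eq[of "int i" "int \<alpha> - 1" k] assms 3 by auto
    have b: "(int i + 1 + (int \<alpha> - 2)) mod NN k \<noteq> (int i + 1) mod NN k"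
      using mod_shift_eq[of "int i + 1" "int \<alpha> - 2" k] assms 3 by auto
    have q1: "int \<alpha> + int i - 1 = int i + (int \<alpha> - 1)" by simp
    have q2: "int \<alpha> + int i - 1 = int i + 1 + (int \<alpha> - 2)" by simp
    have a': "(int \<alpha> + int i - 1) mod NN k \<noteq> int i mod NN k" unfolding q1 using a .
    have b': "(int \<alpha> + int i - 1) mod NN k \<noteq> (int i + 1) mod NN k" unfolding q2 using b .
    have "aff_s k i (int \<alpha> + int i - 1) = int \<alpha> + int i - 1" unfolding aff_s_def using a' b' by simp
    then show ?thesis using 3 unfolding tau_def by simp
  qed
qed

lemma affinv_swap:
  assumes k1: "1 \<le> k" and P: "per k f" and B: "bij f"
  shows "f (int i) < f (int i + 1) \<Longrightarrow> affinv k (f \<circ> aff_s k i) = affinv k f + 1"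
    and "f (int i + 1) < f (int i) \<Longrightarrow> affinv k f = affinv k (f \<circ> aff_s k i) + 1"
    and "Rep k (f \<circ> aff_s k i) (\<lambda>\<alpha>. int (tau \<alpha>) + int i - 1) (\<lambda>\<alpha>. f (int \<alpha> + int i - 1))"
    and "win k (int i - 1) (\<lambda>\<alpha>. int (tau \<alpha>) + int i - 1)"
proof -
  define g where "g = (\<lambda>\<alpha>::nat. int \<alpha> + int i - 1)"
  define g' where "g' = (\<lambda>\<alpha>::nat. int (tau \<alpha>) + int i - 1)"
  define h where "h = (\<lambda>\<alpha>::nat. f (int \<alpha> + int i - 1))"
  have R: "Rep k f g h" and W: "win k (int i - 1) g" and Hr: "resinj k h"
    using per_bij_Rep[OF P B, of "int i"] unfolding g_def h_def by auto
  have tauA: "\<alpha> \<in> {1..Suc k} \<Longrightarrow> tau \<alpha> \<in> {1..Suc k}" for \<alpha> using k1 unfolding tau_def by auto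
  have tautau: "tau (tau \<alpha>) = \<alpha>" for \<alpha> unfolding tau_def by auto
  show R': "Rep k (f \<circ> aff_s k i) g' h"
    unfolding Rep_def
  proof (intro ballI allI)
    fix \<alpha> m assume a: "\<alpha> \<in> {1..Suc k}"
    have "aff_s k i (g' \<alpha> + m * NN k) = aff_s k i (g' \<alpha>) + m * NN k" by (rule s_per)
    also have "aff_s k i (g' \<alpha>) = g \<alpha>"
      using s_on_window[OF k1 tauA[OF a], of i] tautau unfolding g_def g'_def by simp
    finally show "(f \<circ> aff_s k i) (g' \<alpha> + m * NN k) = h \<alpha> + m * NN k"
      using RepD[OF R a] by simp
  qed
  show W': "win k (int i - 1) g'"
    unfolding win_def
  proof
    show "\<forall>\<alpha>\<in>{1..Suc k}. int i - 1 < g' \<alpha> \<and> g' \<alpha> \<le> int i - 1 + NN k"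
      using tauA unfolding g'_def by force
    show "inj_on g' {1..Suc k}" unfolding g'_def inj_on_def by (metis of_nat_eq_iff add_right_cancel diff_add_cancel tautau)
  qed
  have e1: "affinv k f = Cc k h + cross k g h" by (rule affinv_formula[OF R W Hr])
  have e2: "affinv k (f \<circ> aff_s k i) = Cc k h + cross k g' h" by (rule affinv_formula[OF R' W' Hr])
  define S where "S = {(\<alpha>,\<beta>). \<alpha> \<in> {1..Suc k} \<and> \<beta> \<in> {1..Suc k} \<and> g \<alpha> < g \<beta> \<and> h \<beta> < h \<alpha>}"
  define S' where "S' = {(\<alpha>,\<beta>). \<alpha> \<in> {1..Suc k} \<and> \<beta> \<in> {1..Suc k} \<and> g' \<alpha> < g' \<beta> \<and> h \<beta> < h \<alpha>}"
  have fS: "finite S" unfolding S_def by (rule finite_subset[of _ "{1..Suc k} \<times> {1..Suc k}"]) auto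
  have fS': "finite S'" unfolding S'_def by (rule finite_subset[of _ "{1..Suc k} \<times> {1..Suc k}"]) auto
  have h12: "h 1 = f (int i)" "h 2 = f (int i + 1)" unfolding h_def by (simp_all add: add.commute)
  show "f (int i) < f (int i + 1) \<Longrightarrow> affinv k (f \<circ> aff_s k i) = affinv k f + 1"
  proof -
    assume lt: "f (int i) < f (int i + 1)"
    have "S' = insert (2,1) S" using k1 lt h12 unfolding S_def S'_def g_def g'_def tau_def by auto
    moreover have "(2,1) \<notin> S" unfolding S_def g_def by auto
    ultimately have "card S' = card S + 1" using fS by simp
    then show ?thesis using e1 e2 unfolding cross_def S_def S'_def by simp
  qed
  show "f (int i + 1) < f (int i) \<Longrightarrow> affinv k f = affinv k (f \<circ> aff_s k i) + 1"
  proof -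
    assume lt: "f (int i + 1) < f (int i)"
    have "S = insert (1,2) S'" using k1 lt h12 unfolding S_def S'_def g_def g'_def tau_def by auto
    moreover have "(1,2) \<notin> S'" unfolding S'_def g'_def tau_def by auto
    ultimately have "card S = card S' + 1" using fS' by simp
    then show ?thesis using e1 e2 unfolding cross_def S_def S'_def by simp
  qed
qed



abbreviation FF :: "nat \<Rightarrow> nat \<Rightarrow> (int \<Rightarrow> int) \<Rightarrow> (int \<Rightarrow> int)" where
  "FF k \<equiv> (\<lambda>i f. aff_s k i \<circ> f)"

lemma foldr_comp: "foldr (FF k) ws g = foldr (FF k) ws id \<circ> g"
  by (induction ws) (auto simp: comp_assoc)

lemma foldr_snoc: "foldr (FF k) (ws @ [i]) id = foldr (FF k) ws id \<circ> aff_s k i"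
  using foldr_comp[of k ws "aff_s k i \<circ> id"] by simp

lemma foldr_perbij: "1 \<le> k \<Longrightarrow> per k (foldr (FF k) ws id) \<and> bij (foldr (FF k) ws id)"
proof (induction ws)
  case Nil then show ?case by (simp add: per_def bij_id[unfolded id_def])
next
  case (Cons i ws)
  have e: "foldr (FF k) (i # ws) id = aff_s k i \<circ> foldr (FF k) ws id" by simp
  have "per k (aff_s k i \<circ> foldr (FF k) ws id)" using per_comp[OF s_perd] Cons by blast
  moreover have "bij (aff_s k i \<circ> foldr (FF k) ws id)" using s_bij[OF Cons(2)] Cons bij_comp by blast
  ultimately show ?case unfolding e by blast
qed

lemma affinv_id: "affinv k id = 0"
proof -
  have e: "{(p::int, q). 1 \<le> p \<and> p \<le> NN k \<and> p < q \<and> q < p} = {}" by auto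
  show ?thesis unfolding affinv_def id_def e by simp
qed

lemma affinv_comp_le:
  assumes "1 \<le> k" "per k f" "bij f"
  shows "affinv k (f \<circ> aff_s k i) \<le> affinv k f + 1"
proof -
  have "f (int i) \<noteq> f (int i + 1)" using assms(3) unfolding bij_def inj_def by force
  then consider "f (int i) < f (int i + 1)" | "f (int i + 1) < f (int i)" by linarith
  then show ?thesis
  proof cases
    case 1 then show ?thesis using affinv_swap(1)[OF assms] by simp
  next
    case 2 then show ?thesis using affinv_swap(2)[OF assms] by simp
  qed
qed

lemma lower_bound:
  assumes "1 \<le> k"
  shows "affinv k (foldr (FF k) ws id) \<le> length ws"
proof (induction ws rule: rev_induct)
  case Nil then show ?case using affinv_id[of k] by (simp add: id_def)
next
  case (snoc i ws)
  have pb: "per k (foldr (FF k) ws id)" "bij (foldr (FF k) ws id)" using foldr_perbij[OF assms] by auto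
  have "affinv k (foldr (FF k) (ws @ [i]) id) = affinv k (foldr (FF k) ws id \<circ> aff_s k i)"
    by (simp only: foldr_snoc)
  also have "\<dots> \<le> affinv k (foldr (FF k) ws id) + 1" by (rule affinv_comp_le[OF assms pb])
  finally have c: "affinv k (foldr (FF k) (ws @ [i]) id) \<le> affinv k (foldr (FF k) ws id) + 1" .
  have "length (ws @ [i]) = length ws + 1" by simp
  then show ?case using c snoc.IH by linarith
qed

lemma affW_iff: "f \<in> affW k \<longleftrightarrow> bij f \<and> per k f \<and> (\<Sum>i = 1..NN k. f i) = int ((k + 2) choose 2)"
  unfolding affW_def per_def by (simp add: add.assoc)

lemma sum_id_int: "(\<Sum>i = 1..NN k. i) = int ((k + 2) choose 2)"
proof (induction k)
  case 0 then show ?case by (simp add: numeral_2_eq_2)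
next
  case (Suc k)
  have "{1..NN (Suc k)} = insert (NN k + 1) {1..NN k}" by auto
  then have "(\<Sum>i = 1..NN (Suc k). i) = (NN k + 1) + (\<Sum>i = 1..NN k. i)" by simp
  also have "\<dots> = int (k + 2) + int ((k + 2) choose 2)" using Suc by simp
  also have "\<dots> = int ((Suc k + 2) choose 2)"
    by (simp add: numeral_2_eq_2)
  finally show ?case .
qed

lemma mono_int:
  assumes "\<forall>y. f y < f (y + 1)" "a < b"
  shows "(f :: int \<Rightarrow> int) a < f b"
proof -
  have "\<forall>b. b = a + int d + 1 \<longrightarrow> f a < f b" for d
  proof (induction d)
    case 0 then show ?case using assms(1) by simp
  next
    case (Suc d)
    then show ?case using assms(1)[rule_format, of "a + int d + 1"] by (auto simp: algebra_simps)
  qed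
  moreover have "b = a + int (nat (b - a - 1)) + 1" using assms(2) by simp
  ultimately show ?thesis by blast
qed

lemma all_asc_mono:
  assumes P: "per k f" and asc: "\<forall>i\<le>k. f (int i) < f (int i + 1)"
  shows "f y < f (y + 1)"
proof -
  define j where "j = y mod NN k"
  define m where "m = y div NN k"
  have y: "y = j + m * NN k" unfolding j_def m_def using div_mult_mod_eq[of y "NN k"] by linarith
  have j: "0 \<le> j" "j < NN k" unfolding j_def using mod_range[of y k] by simp_all
  then have "j = int (nat j)" "nat j \<le> k" by simp_all
  then have "f j < f (j + 1)" using asc by metis
  moreover have "f y = f j + m * NN k" using perD[OF P] y by simp
  moreover have "f (y + 1) = f (j + 1) + m * NN k" using perD[OF P, of "j+1" m] y by (simp add: algebra_simps)
  ultimately show ?thesis by simp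
qed

lemma no_desc_id:
  assumes A: "f \<in> affW k" and asc: "\<forall>i\<le>k. f (int i) < f (int i + 1)"
  shows "f = id"
proof -
  have B: "bij f" and P: "per k f" and S: "(\<Sum>i = 1..NN k. f i) = int ((k + 2) choose 2)"
    using A affW_iff by auto
  have inc: "\<forall>y. f y < f (y + 1)" using all_asc_mono[OF P asc] by blast
  have step: "f (y + 1) = f y + 1" for y
  proof -
    obtain z where z: "f z = f y + 1" using B unfolding bij_def surj_def by metis
    have "\<not> z \<le> y"
    proof
      assume "z \<le> y"
      then have "f z \<le> f y" using mono_int[OF inc, of z y] by (cases "z = y") auto
      then show False using z by simp
    qed
    moreover have "\<not> y + 2 \<le> z"
    proof
      assume "y + 2 \<le> z"
      then have "f (y + 1) < f z" using mono_int[OF inc, of "y + 1" z] by simp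
      moreover have "f y < f (y + 1)" using inc by blast
      ultimately show False using z by simp
    qed
    ultimately have "z = y + 1" by simp
    then show ?thesis using z by simp
  qed
  have lin: "f y = y + f 0" for y
  proof (induction y rule: int_induct[where k=0])
    case base then show ?case by simp
  next
    case (step1 i) then show ?case using step[of i] by simp
  next
    case (step2 i) then show ?case using step[of "i - 1"] by simp
  qed
  have "(\<Sum>i = 1..NN k. f i) = (\<Sum>i = 1..NN k. i + f 0)"
    by (rule sum.cong[OF refl]) (rule lin)
  also have "\<dots> = (\<Sum>i = 1..NN k. i) + (\<Sum>i = 1..NN k. f 0)" by (rule sum.distrib)
  also have "(\<Sum>i = 1..NN k. f 0) = NN k * f 0" by simp
  finally have "NN k * f 0 = 0" using S sum_id_int[of k] by simp
  then have "f 0 = 0" by simp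
  show ?thesis
  proof (rule ext)
    fix y have "f y = y + f 0" by (rule lin)
    then show "f y = id y" using \<open>f 0 = 0\<close> by simp
  qed
qed

lemma affW_swap:
  assumes k1: "1 \<le> k" and A: "f \<in> affW k"
  shows "f \<circ> aff_s k i \<in> affW k"
proof -
  have B: "bij f" and P: "per k f" and S: "(\<Sum>i = 1..NN k. f i) = int ((k + 2) choose 2)"
    using A affW_iff by auto
  define g where "g = (\<lambda>\<alpha>::nat. int \<alpha> + int i - 1)"
  define g' where "g' = (\<lambda>\<alpha>::nat. int (tau \<alpha>) + int i - 1)"
  define h where "h = (\<lambda>\<alpha>::nat. f (int \<alpha> + int i - 1))"
  have R: "Rep k f g h" and W: "win k (int i - 1) g"
    using per_bij_Rep[OF P B, of "int i"] unfolding g_def h_def by auto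
  have R': "Rep k (f \<circ> aff_s k i) g' h" and W': "win k (int i - 1) g'"
    using affinv_swap(3,4)[OF k1 P B] unfolding g'_def h_def by auto
  have tauA: "tau ` {1..Suc k} = {1..Suc k}"
  proof -
    have "tau ` {1..Suc k} \<subseteq> {1..Suc k}" using k1 unfolding tau_def by auto
    moreover have "{1..Suc k} \<subseteq> tau ` {1..Suc k}"
    proof
      fix x assume "x \<in> {1..Suc k}"
      moreover have "tau (tau x) = x" unfolding tau_def by auto
      moreover have "tau x \<in> {1..Suc k}" using k1 \<open>x \<in> {1..Suc k}\<close> unfolding tau_def by auto
      ultimately show "x \<in> tau ` {1..Suc k}" by (metis image_eqI)
    qed
    ultimately show ?thesis by blast
  qed
  have itau: "inj_on tau {1..Suc k}" unfolding inj_on_def tau_def by auto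
  have "(\<Sum>\<alpha> = 1..Suc k. g' \<alpha>) = (\<Sum>\<alpha> = 1..Suc k. g (tau \<alpha>))" unfolding g_def g'_def by simp
  also have "\<dots> = (\<Sum>\<alpha> \<in> tau ` {1..Suc k}. g \<alpha>)" using sum.reindex[OF itau, of g] by simp
  finally have sg: "(\<Sum>\<alpha> = 1..Suc k. g' \<alpha>) = (\<Sum>\<alpha> = 1..Suc k. g \<alpha>)" using tauA by simp
  have s1: "(\<Sum>j = 1..NN k. f j - j) = (\<Sum>\<alpha> = 1..Suc k. h \<alpha> - g \<alpha>)" by (rule Rep_sum[OF R W])
  have s2: "(\<Sum>j = 1..NN k. (f \<circ> aff_s k i) j - j) = (\<Sum>\<alpha> = 1..Suc k. h \<alpha> - g' \<alpha>)" by (rule Rep_sum[OF R' W'])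
  have "(\<Sum>j = 1..NN k. (f \<circ> aff_s k i) j) = (\<Sum>j = 1..NN k. f j)"
    using s1 s2 sg by (simp add: sum_subtractf)
  then show ?thesis using S B P k1 s_bij s_perd per_comp bij_comp affW_iff by metis
qed

lemma upper_bound:
  assumes k1: "1 \<le> k"
  shows "f \<in> affW k \<Longrightarrow> \<exists>ws. length ws = affinv k f \<and> (\<forall>i\<in>set ws. i \<le> k) \<and> f = foldr (FF k) ws id"
proof (induction "affinv k f" arbitrary: f)
  case 0
  have B: "bij f" and P: "per k f" using 0 affW_iff by auto
  have "\<forall>i\<le>k. f (int i) < f (int i + 1)"
  proof (intro allI impI)
    fix i assume "i \<le> k"
    have "f (int i) \<noteq> f (int i + 1)" using B unfolding bij_def inj_def by force
    moreover have "\<not> f (int i + 1) < f (int i)" using affinv_swap(2)[OF k1 P B, of i] 0(1) by auto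
    ultimately show "f (int i) < f (int i + 1)" by simp
  qed
  then have "f = id" using no_desc_id 0 by blast
  then show ?case using 0(1) by (intro exI[of _ "[]"]) simp
next
  case (Suc n)
  have B: "bij f" and P: "per k f" using Suc affW_iff by auto
  have "\<exists>i\<le>k. f (int i + 1) < f (int i)"
  proof (rule ccontr)
    assume "\<not> ?thesis"
    then have "\<forall>i\<le>k. f (int i) < f (int i + 1)"
      using B unfolding bij_def inj_def by (metis add_cancel_left_right linorder_neqE_linordered_idom one_neq_zero)
    then have "f = id" using no_desc_id Suc(3) by blast
    then show False using Suc(2) affinv_id by simp
  qed
  then obtain i where i: "i \<le> k" "f (int i + 1) < f (int i)" by blast
  have e: "affinv k f = affinv k (f \<circ> aff_s k i) + 1" using affinv_swap(2)[OF k1 P B i(2)] .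
  have A': "f \<circ> aff_s k i \<in> affW k" using affW_swap[OF k1 Suc(3)] .
  obtain ws where ws: "length ws = affinv k (f \<circ> aff_s k i)" "\<forall>j\<in>set ws. j \<le> k"
    "f \<circ> aff_s k i = foldr (FF k) ws id"
    using Suc(1)[of "f \<circ> aff_s k i"] A' e Suc(2) by auto
  have "f = (f \<circ> aff_s k i) \<circ> aff_s k i" using s_inv[OF k1] by (auto simp: fun_eq_iff)
  also have "\<dots> = foldr (FF k) (ws @ [i]) id" using ws(3) foldr_snoc by simp
  finally show ?case using ws e Suc(2) i(1) by (intro exI[of _ "ws @ [i]"]) auto
qed

theorem aff_len_eq:
  assumes k1: "1 \<le> k" and A: "f \<in> affW k"
  shows "aff_len k f = affinv k f"
proof -
  obtain ws where ws: "length ws = affinv k f" "\<forall>i\<in>set ws. i \<le> k" "f = foldr (FF k) ws id"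
    using upper_bound[OF k1 A] by blast
  let ?P = "\<lambda>n. \<exists>ws. length ws = n \<and> (\<forall>i\<in>set ws. i \<le> k) \<and> f = foldr (FF k) ws id"
  have ex: "?P (affinv k f)" using ws by blast
  have le: "aff_len k f \<le> affinv k f" unfolding aff_len_def using Least_le[of ?P, OF ex] .
  obtain ws' where ws': "length ws' = aff_len k f" "\<forall>i\<in>set ws'. i \<le> k" "f = foldr (FF k) ws' id"
    using LeastI[of ?P, OF ex] unfolding aff_len_def by blast
  have "affinv k f \<le> aff_len k f" using lower_bound[OF k1, of ws'] ws' by simp
  then show ?thesis using le by simp
qed



definition bnd :: "nat \<Rightarrow> nat \<Rightarrow> nat set \<Rightarrow> nat \<Rightarrow> nat" where
  "bnd lo hi D i = (if i = 0 then lo else if i \<le> card D then sorted_list_of_set D ! (i - 1) else hi)"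

definition blk :: "nat \<Rightarrow> nat \<Rightarrow> nat set \<Rightarrow> nat \<Rightarrow> nat" where
  "blk lo hi D j = (THE i. 1 \<le> i \<and> i \<le> card D + 1 \<and> j \<in> {bnd lo hi D (i - 1) + 1 .. bnd lo hi D i})"

locale bndL =
  fixes lo hi :: nat and D :: "nat set"
  assumes lohi: "lo < hi" and Dsub: "D \<subseteq> {lo<..<hi}"
begin

abbreviation "c \<equiv> card D"
abbreviation "L \<equiv> sorted_list_of_set D"
abbreviation "B \<equiv> bnd lo hi D"

lemma finD: "finite D" using Dsub by (rule finite_subset) simp

lemma L_len: "length L = c" using finD by simp
lemma L_set: "set L = D" using finD by simp
lemma L_sorted: "sorted_wrt (<) L" using finD by simp

lemma L_range: "i < c \<Longrightarrow> lo < L ! i \<and> L ! i < hi"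
  using L_set L_len Dsub nth_mem by (metis greaterThanLessThan_iff subsetD)

lemma B_step: "i < c + 1 \<Longrightarrow> B i < B (Suc i)"
proof -
  assume i: "i < c + 1"
  consider "i = 0" "c = 0" | "i = 0" "c > 0" | "0 < i" "i < c" | "0 < i" "i = c" using i by linarith
  then show ?thesis
  proof cases
    case 1 then show ?thesis using lohi unfolding bnd_def by simp
  next
    case 2 then show ?thesis using L_range[of 0] unfolding bnd_def by simp
  next
    case 3
    have "L ! (i - 1) < L ! i" using sorted_wrt_nth_less[OF L_sorted, of "i - 1" i] L_len 3 by simp
    then show ?thesis using 3 unfolding bnd_def by simp
  next
    case 4
    then show ?thesis using L_range[of "i - 1"] unfolding bnd_def by simp
  qed
qed

lemma B_mono_lt: "i < i' \<Longrightarrow> i' \<le> c + 1 \<Longrightarrow> B i < B i'"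
proof (induction i')
  case 0 then show ?case by simp
next
  case (Suc i')
  have st: "B i' < B (Suc i')" using B_step Suc by simp
  show ?case
  proof (cases "i = i'")
    case True then show ?thesis using st by simp
  next
    case False then show ?thesis using Suc st by simp
  qed
qed

lemma B_mono_le: "i \<le> i' \<Longrightarrow> i' \<le> c + 1 \<Longrightarrow> B i \<le> B i'"
  using B_mono_lt by (cases "i = i'") (auto simp: less_imp_le)

lemma B_range: "lo \<le> B i \<and> B i \<le> hi"
proof (cases "i = 0 \<or> c < i")
  case True then show ?thesis using lohi unfolding bnd_def by auto
next
  case False
  then have "i - 1 < c" by linarith
  then show ?thesis using L_range[of "i - 1"] False unfolding bnd_def by auto
qed

lemma B_last: "B (c + 1) = hi" unfolding bnd_def by simp
lemma B_0: "B 0 = lo" unfolding bnd_def by simp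

definition inblk where "inblk j i \<longleftrightarrow> 1 \<le> i \<and> i \<le> c + 1 \<and> j \<in> {B (i - 1) + 1 .. B i}"

lemma blk_uniq: "inblk j i1 \<Longrightarrow> inblk j i2 \<Longrightarrow> i1 = i2"
proof (rule ccontr)
  assume a: "inblk j i1" "inblk j i2" "i1 \<noteq> i2"
  { fix p q assume ip: "inblk j p" and iq: "inblk j q" and pq: "p < q"
    have "p \<le> q - 1" "q - 1 \<le> c + 1" using pq iq unfolding inblk_def by auto
    then have "B p \<le> B (q - 1)" by (rule B_mono_le)
    moreover have "j \<le> B p" "B (q - 1) < j" using ip iq unfolding inblk_def by auto
    ultimately have False by linarith }
  then show False using a by (metis linorder_neqE_nat)
qed

lemma blk_ex: "lo < j \<Longrightarrow> j \<le> hi \<Longrightarrow> \<exists>i. inblk j i"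
proof -
  assume j: "lo < j" "j \<le> hi"
  define I where "I = {i. 1 \<le> i \<and> i \<le> c + 1 \<and> j \<le> B i}"
  have ne: "c + 1 \<in> I" using j B_last unfolding I_def by simp
  define i0 where "i0 = Min I"
  have fI: "finite I" unfolding I_def by simp
  have i0I: "i0 \<in> I" using Min_in[OF fI] ne unfolding i0_def by blast
  have "B (i0 - 1) < j"
  proof (cases "i0 = 1")
    case True then show ?thesis using j B_0 by simp
  next
    case False
    then have "i0 - 1 \<notin> I \<or> i0 - 1 \<ge> i0" using Min_le[OF fI] unfolding i0_def by fastforce
    then show ?thesis using i0I False unfolding I_def by auto
  qed
  then have "inblk j i0" using i0I unfolding I_def inblk_def by auto
  then show ?thesis by blast
qed

lemma blk_eq: "inblk j i \<Longrightarrow> blk lo hi D j = i"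
  unfolding blk_def using blk_uniq by (metis (no_types, lifting) inblk_def the_equality)

lemma blk_inblk: "lo < j \<Longrightarrow> j \<le> hi \<Longrightarrow> inblk j (blk lo hi D j)"
  using blk_ex blk_eq by blast

lemma blk_range: "lo < j \<Longrightarrow> j \<le> hi \<Longrightarrow> 1 \<le> blk lo hi D j \<and> blk lo hi D j \<le> c + 1"
  using blk_inblk unfolding inblk_def by blast

lemma blk_mono: "lo < j \<Longrightarrow> j \<le> j' \<Longrightarrow> j' \<le> hi \<Longrightarrow> blk lo hi D j \<le> blk lo hi D j'"
proof (rule ccontr)
  assume a: "lo < j" "j \<le> j'" "j' \<le> hi" "\<not> blk lo hi D j \<le> blk lo hi D j'"
  define p where "p = blk lo hi D j'"
  define q where "q = blk lo hi D j"
  have ip: "inblk j' p" unfolding p_def using blk_inblk a by simp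
  have iq: "inblk j q" unfolding q_def using blk_inblk a by simp
  have "p < q" using a unfolding p_def q_def by simp
  then have "p \<le> q - 1" "q - 1 \<le> c + 1" using iq unfolding inblk_def by auto
  then have "B p \<le> B (q - 1)" by (rule B_mono_le)
  moreover have "j' \<le> B p" "B (q - 1) < j" using ip iq unfolding inblk_def by auto
  ultimately show False using a by linarith
qed

lemma D_is_B: "d \<in> D \<Longrightarrow> \<exists>i. 1 \<le> i \<and> i \<le> c \<and> B i = d"
proof -
  assume "d \<in> D"
  then obtain t where t: "t < c" "L ! t = d" using L_set L_len by (metis in_set_conv_nth)
  then have "B (Suc t) = d" unfolding bnd_def by simp
  then show ?thesis using t by (intro exI[of _ "Suc t"]) auto
qed

lemma blk_D: "lo < j \<Longrightarrow> j < hi \<Longrightarrow> blk lo hi D j = blk lo hi D (Suc j) \<Longrightarrow> j \<notin> D"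
proof
  assume a: "lo < j" "j < hi" "blk lo hi D j = blk lo hi D (Suc j)" "j \<in> D"
  obtain i where i: "1 \<le> i" "i \<le> c" "B i = j" using D_is_B a(4) by blast
  have "inblk j i" using i B_mono_lt[of "i - 1" i] unfolding inblk_def by auto
  then have "blk lo hi D j = i" by (rule blk_eq)
  moreover have "inblk (Suc j) (blk lo hi D (Suc j))" using blk_inblk a by simp
  ultimately have "Suc j \<le> B i" using a(3) unfolding inblk_def by simp
  then show False using i by simp
qed

end



definition DAs :: "(nat \<Rightarrow> nat) \<Rightarrow> nat \<Rightarrow> nat \<Rightarrow> nat set" where
  "DAs x k r = {d \<in> desc x k r. d < r}"
definition DBs :: "(nat \<Rightarrow> nat) \<Rightarrow> nat \<Rightarrow> nat \<Rightarrow> nat set" where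
  "DBs x k r = {d \<in> desc x k r. r < d}"

definition lev :: "(nat \<Rightarrow> nat) \<Rightarrow> nat \<Rightarrow> nat \<Rightarrow> nat \<Rightarrow> int" where
  "lev x k r j = (if j \<le> r then - (int (nA x k r) + 2 - int (blk 0 r (DAs x k r) j))
                 else int (blk r (k + 1) (DBs x k r) j) - 1)"

lemma sorted_wrt_concat_map:
  assumes "\<forall>x\<in>set xs. sorted_wrt R (f x)"
    and "sorted_wrt (\<lambda>x y. \<forall>a\<in>set (f x). \<forall>b\<in>set (f y). R a b) xs"
  shows "sorted_wrt R (concat (map f xs))"
  using assms by (induction xs) (auto simp: sorted_wrt_append)

lemma sorted_wrt_distinct_irrefl:
  assumes "sorted_wrt R xs" "\<forall>x. \<not> R x x"
  shows "distinct xs"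
  using assms by (induction xs) auto

locale constrL =
  fixes x :: "nat \<Rightarrow> nat" and k r :: nat
  assumes xA: "bij_betw x {1..Suc k} {1..Suc k}"
    and r_pos: "1 \<le> r" and r_le_k: "r \<le> k"
begin

abbreviation "DA \<equiv> DAs x k r"
abbreviation "DB \<equiv> DBs x k r"
abbreviation "lv \<equiv> lev x k r"
abbreviation "A \<equiv> {1..Suc k}"

lemma DA_sub: "DA \<subseteq> {0<..<r}" unfolding DAs_def desc_def by auto
lemma DB_sub: "DB \<subseteq> {r<..<k+1}" unfolding DBs_def desc_def by auto

sublocale bA: bndL 0 r DA using DA_sub r_pos by unfold_locales auto
sublocale bB: bndL r "k+1" DB using DB_sub r_le_k by unfold_locales auto

lemma alpha_eq: "alpha x k r = bnd 0 r DA"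
  unfolding alpha_def bnd_def nA_def DAs_def by (simp add: fun_eq_iff)
lemma beta_eq: "beta x k r = bnd r (k+1) DB"
  unfolding beta_def bnd_def nB_def DBs_def by (simp add: fun_eq_iff)
lemma nA_eq: "nA x k r = card DA" unfolding nA_def DAs_def by simp
lemma nB_eq: "nB x k r = card DB" unfolding nB_def DBs_def by simp

lemma ppos_eq: "ppos x k r j = int (x j) - lv j * NN k"
proof -
  have a: "(THE i. 1 \<le> i \<and> i \<le> nA x k r + 1 \<and> j \<in> blockA x k r i) = blk 0 r DA j"
    unfolding blk_def blockA_def alpha_eq nA_eq by simp
  have b: "(THE i. 1 \<le> i \<and> i \<le> nB x k r + 1 \<and> j \<in> blockB x k r i) = blk r (k+1) DB j"
    unfolding blk_def blockB_def beta_eq nB_eq by simp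
  show ?thesis unfolding ppos_def lev_def a b by (simp add: algebra_simps)
qed

lemma lev_neg: "1 \<le> j \<Longrightarrow> j \<le> r \<Longrightarrow> lv j \<le> -1"
  using bA.blk_range[of j] unfolding lev_def nA_eq by auto

lemma lev_nonneg: "r < j \<Longrightarrow> j \<le> Suc k \<Longrightarrow> 0 \<le> lv j"
  using bB.blk_range[of j] unfolding lev_def by auto

lemma lev_mono: "1 \<le> j \<Longrightarrow> j \<le> j' \<Longrightarrow> j' \<le> Suc k \<Longrightarrow> lv j \<le> lv j'"
proof -
  assume a: "1 \<le> j" "j \<le> j'" "j' \<le> Suc k"
  consider "j' \<le> r" | "j \<le> r" "r < j'" | "r < j" using a by linarith
  then show ?thesis
  proof cases
    case 1 then show ?thesis using bA.blk_mono[of j j'] a unfolding lev_def by simp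
  next
    case 2 then show ?thesis using lev_neg[of j] lev_nonneg[of j'] a by simp
  next
    case 3 then show ?thesis using bB.blk_mono[of j j'] a unfolding lev_def by simp
  qed
qed

lemma x_inj: "inj_on x A" using xA unfolding bij_betw_def by simp

lemma lev_eq_asc:
  assumes j: "1 \<le> j" "Suc j \<le> Suc k" and e: "lv j = lv (Suc j)"
  shows "x j < x (Suc j)"
proof -
  have jr: "j \<noteq> r" using lev_neg[of r] lev_nonneg[of "Suc r"] e j r_pos by auto
  have nd: "j \<notin> desc x k r"
  proof (cases "j < r")
    case True
    then have "blk 0 r DA j = blk 0 r DA (Suc j)" using e unfolding lev_def by simp
    then have "j \<notin> DA" using bA.blk_D[of j] j True by simp
    then show ?thesis using True unfolding DAs_def by simp
  next
    case False
    then have "r < j" using jr by simp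
    then have "blk r (k+1) DB j = blk r (k+1) DB (Suc j)" using e unfolding lev_def by simp
    then have "j \<notin> DB" using bB.blk_D[of j] j \<open>r < j\<close> by simp
    then show ?thesis using \<open>r < j\<close> unfolding DBs_def by simp
  qed
  then have "\<not> x (Suc j) < x j" using j jr unfolding desc_def by auto
  moreover have "x j \<noteq> x (Suc j)" using x_inj j unfolding inj_on_def by fastforce
  ultimately show ?thesis by simp
qed

lemma lev_eq_x:
  assumes "1 \<le> j" "j < j'" "j' \<le> Suc k" "lv j = lv j'"
  shows "x j < x j'"
  using assms
proof (induction j' rule: less_induct)
  case (less j')
  obtain j0 where j0: "j' = Suc j0" using less by (cases j') auto
  have m1: "lv j \<le> lv j0" using lev_mono[of j j0] less j0 by simp
  have m2: "lv j0 \<le> lv j'" using lev_mono[of j0 j'] less j0 by simp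
  have e0: "lv j0 = lv (Suc j0)" using m1 m2 less j0 by simp
  have st: "x j0 < x (Suc j0)" using lev_eq_asc[of j0] e0 less j0 by simp
  show ?case
  proof (cases "j = j0")
    case True then show ?thesis using st j0 by simp
  next
    case False
    then have "x j < x j0" using less.IH[of j0] less j0 m1 m2 by simp
    then show ?thesis using st j0 by simp
  qed
qed

end



context constrL begin

abbreviation "\<pi> \<equiv> order_list x k r"
definition "Rl j j' \<longleftrightarrow> lv j' < lv j \<or> (lv j = lv j' \<and> j < j')"

definition "Bl m = [beta x k r (m - 1) + 1 ..< beta x k r m + 1]"
definition "Al i = [alpha x k r (i - 1) + 1 ..< alpha x k r i + 1]"

lemma pi_eq: "\<pi> = concat (map Bl (rev [1..<card DB + 2])) @ concat (map Al (rev [1..<card DA + 2]))"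
  unfolding order_list_def Bl_def Al_def nA_eq nB_eq by simp

lemma Bl_mem: "m \<in> {1..card DB + 1} \<Longrightarrow> j \<in> set (Bl m) \<Longrightarrow> r < j \<and> j \<le> Suc k \<and> lv j = int m - 1"
proof -
  assume m: "m \<in> {1..card DB + 1}" and j: "j \<in> set (Bl m)"
  have ib: "bB.inblk j m" using m j unfolding bB.inblk_def Bl_def beta_eq by auto
  have "blk r (k+1) DB j = m" using bB.blk_eq[OF ib] .
  moreover have "r < j" "j \<le> Suc k" using ib bB.B_range[of "m - 1"] bB.B_range[of m] unfolding bB.inblk_def by auto
  ultimately show ?thesis unfolding lev_def by simp
qed

lemma Al_mem: "i \<in> {1..card DA + 1} \<Longrightarrow> j \<in> set (Al i) \<Longrightarrow> 1 \<le> j \<and> j \<le> r \<and> lv j = - (int (card DA) + 2 - int i)"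
proof -
  assume m: "i \<in> {1..card DA + 1}" and j: "j \<in> set (Al i)"
  have ib: "bA.inblk j i" using m j unfolding bA.inblk_def Al_def alpha_eq by auto
  have "blk 0 r DA j = i" using bA.blk_eq[OF ib] .
  moreover have "1 \<le> j" "j \<le> r" using ib bA.B_range[of "i - 1"] bA.B_range[of i] unfolding bA.inblk_def by auto
  ultimately show ?thesis unfolding lev_def nA_eq by simp
qed

lemma pi_sorted: "sorted_wrt Rl \<pi>"
proof -
  have sB: "sorted_wrt Rl (concat (map Bl (rev [1..<card DB + 2])))"
  proof (rule sorted_wrt_concat_map)
    show "\<forall>m\<in>set (rev [1..<card DB + 2]). sorted_wrt Rl (Bl m)"
    proof
      fix m assume "m \<in> set (rev [1..<card DB + 2])"
      then have m: "m \<in> {1..card DB + 1}" by auto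
      have "sorted_wrt (<) (Bl m)" unfolding Bl_def by (rule sorted_wrt_upt)
      then show "sorted_wrt Rl (Bl m)"
        by (rule sorted_wrt_mono_rel[rotated]) (use Bl_mem[OF m] in \<open>auto simp: Rl_def\<close>)
    qed
    have "sorted_wrt (\<lambda>m m'. m' < m) (rev [1..<card DB + 2])" by (subst sorted_wrt_rev) (rule sorted_wrt_upt)
    then show "sorted_wrt (\<lambda>m m'. \<forall>a\<in>set (Bl m). \<forall>b\<in>set (Bl m'). Rl a b) (rev [1..<card DB + 2])"
    proof (rule sorted_wrt_mono_rel[rotated])
      fix m m' assume "m \<in> set (rev [1..<card DB + 2])" "m' \<in> set (rev [1..<card DB + 2])" "m' < m"
      then show "\<forall>a\<in>set (Bl m). \<forall>b\<in>set (Bl m'). Rl a b"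
        using Bl_mem[of m] Bl_mem[of m'] unfolding Rl_def by auto
    qed
  qed
  have sA: "sorted_wrt Rl (concat (map Al (rev [1..<card DA + 2])))"
  proof (rule sorted_wrt_concat_map)
    show "\<forall>m\<in>set (rev [1..<card DA + 2]). sorted_wrt Rl (Al m)"
    proof
      fix m assume "m \<in> set (rev [1..<card DA + 2])"
      then have m: "m \<in> {1..card DA + 1}" by auto
      have "sorted_wrt (<) (Al m)" unfolding Al_def by (rule sorted_wrt_upt)
      then show "sorted_wrt Rl (Al m)"
        by (rule sorted_wrt_mono_rel[rotated]) (use Al_mem[OF m] in \<open>auto simp: Rl_def\<close>)
    qed
    have "sorted_wrt (\<lambda>m m'. m' < m) (rev [1..<card DA + 2])" by (subst sorted_wrt_rev) (rule sorted_wrt_upt)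
    then show "sorted_wrt (\<lambda>m m'. \<forall>a\<in>set (Al m). \<forall>b\<in>set (Al m'). Rl a b) (rev [1..<card DA + 2])"
    proof (rule sorted_wrt_mono_rel[rotated])
      fix m m' assume "m \<in> set (rev [1..<card DA + 2])" "m' \<in> set (rev [1..<card DA + 2])" "m' < m"
      then show "\<forall>a\<in>set (Al m). \<forall>b\<in>set (Al m'). Rl a b"
        using Al_mem[of m] Al_mem[of m'] unfolding Rl_def by auto
    qed
  qed
  have cross: "\<forall>a\<in>set (concat (map Bl (rev [1..<card DB + 2]))). \<forall>b\<in>set (concat (map Al (rev [1..<card DA + 2]))). Rl a b"
  proof (intro ballI)
    fix a b assume a: "a \<in> set (concat (map Bl (rev [1..<card DB + 2])))"
      and b: "b \<in> set (concat (map Al (rev [1..<card DA + 2])))"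
    obtain m where "m \<in> set [1..<card DB + 2]" "a \<in> set (Bl m)" using a by (simp only: set_concat set_map set_rev) blast
    then have "m \<in> {1..card DB + 1}" "a \<in> set (Bl m)" by (auto simp only: set_upt) auto
    then have "0 \<le> lv a" using Bl_mem by force
    obtain i where "i \<in> set [1..<card DA + 2]" "b \<in> set (Al i)" using b by (simp only: set_concat set_map set_rev) blast
    then have "i \<in> {1..card DA + 1}" "b \<in> set (Al i)" by (auto simp only: set_upt) auto
    then have "lv b < 0" using Al_mem by force
    show "Rl a b" unfolding Rl_def using \<open>0 \<le> lv a\<close> \<open>lv b < 0\<close> by simp
  qed
  show ?thesis unfolding pi_eq using sA sB cross by (intro iffD2[OF sorted_wrt_append]) blast
qed

lemma pi_distinct: "distinct \<pi>"
  using sorted_wrt_distinct_irrefl[OF pi_sorted] unfolding Rl_def by simp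

lemma pi_set: "set \<pi> = A"
proof
  show "set \<pi> \<subseteq> A"
  proof
    fix j assume "j \<in> set \<pi>"
    then consider m where "m \<in> {1..card DB + 1}" "j \<in> set (Bl m)" | i where "i \<in> {1..card DA + 1}" "j \<in> set (Al i)"
      unfolding pi_eq by fastforce
    then show "j \<in> A"
    proof cases
      case 1 then show ?thesis using Bl_mem r_pos by force
    next
      case 2 then show ?thesis using Al_mem r_le_k by force
    qed
  qed
  show "A \<subseteq> set \<pi>"
  proof
    fix j assume j: "j \<in> A"
    show "j \<in> set \<pi>"
    proof (cases "j \<le> r")
      case True
      define i where "i = blk 0 r DA j"
      have ib: "bA.inblk j i" unfolding i_def using bA.blk_inblk j True by simp
      then have "i \<in> set (rev [1..<card DA + 2])" "j \<in> set (Al i)"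
        unfolding bA.inblk_def Al_def alpha_eq by auto
      then show ?thesis unfolding pi_eq by auto
    next
      case False
      define m where "m = blk r (k+1) DB j"
      have ib: "bB.inblk j m" unfolding m_def using bB.blk_inblk j False by simp
      then have "m \<in> set (rev [1..<card DB + 2])" "j \<in> set (Bl m)"
        unfolding bB.inblk_def Bl_def beta_eq by auto
      then show ?thesis unfolding pi_eq by auto
    qed
  qed
qed

lemma pi_len: "length \<pi> = Suc k"
  using distinct_card[OF pi_distinct] pi_set by simp

definition "idx j = (THE q. q < length \<pi> \<and> \<pi> ! q = j)"

lemma idx_prop: "j \<in> A \<Longrightarrow> idx j < Suc k \<and> \<pi> ! idx j = j"
proof -
  assume "j \<in> A"
  then have "\<exists>!q. q < length \<pi> \<and> \<pi> ! q = j" using distinct_Ex1[OF pi_distinct] pi_set by simp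
  then have "(THE q. q < length \<pi> \<and> \<pi> ! q = j) < length \<pi> \<and> \<pi> ! (THE q. q < length \<pi> \<and> \<pi> ! q = j) = j"
    by (rule theI')
  then show ?thesis unfolding idx_def using pi_len by simp
qed

lemma idx_nth: "q < Suc k \<Longrightarrow> idx (\<pi> ! q) = q"
proof -
  assume q: "q < Suc k"
  have "\<pi> ! q \<in> A" using q pi_set pi_len nth_mem by metis
  then have "idx (\<pi> ! q) < Suc k" "\<pi> ! idx (\<pi> ! q) = \<pi> ! q" using idx_prop by auto
  then show ?thesis using q pi_distinct pi_len nth_eq_iff_index_eq by metis
qed

lemma pi_mem: "q < Suc k \<Longrightarrow> \<pi> ! q \<in> A"
  using pi_set pi_len nth_mem by metis

lemma Rl_nth: "q < q' \<Longrightarrow> q' < Suc k \<Longrightarrow> Rl (\<pi> ! q) (\<pi> ! q')"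
  using sorted_wrt_nth_less[OF pi_sorted] pi_len by simp

definition "rank j = int (idx j) + 1"
definition "key j = rank j + lv j * NN k"

lemma rank_range: "j \<in> A \<Longrightarrow> 1 \<le> rank j \<and> rank j \<le> NN k"
  using idx_prop unfolding rank_def by fastforce

lemma key_mono:
  assumes a: "a \<in> A" "b \<in> A" "a < b"
  shows "key a < key b"
proof (cases "lv a = lv b")
  case True
  have "\<not> idx b \<le> idx a"
  proof
    assume le: "idx b \<le> idx a"
    have "idx b \<noteq> idx a" using idx_prop a by (metis less_irrefl)
    then have lt: "idx b < idx a" using le by simp
    have ia: "idx a < Suc k" "\<pi> ! idx a = a" using idx_prop a(1) by auto
    have ib: "\<pi> ! idx b = b" using idx_prop a(2) by auto
    have "Rl (\<pi> ! idx b) (\<pi> ! idx a)" by (rule Rl_nth[OF lt ia(1)])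
    then have "Rl b a" using ia ib by simp
    then show False using True a unfolding Rl_def by simp
  qed
  then show ?thesis unfolding key_def rank_def using True by simp
next
  case False
  then have "lv a + 1 \<le> lv b" using lev_mono[of a b] a by simp
  then have "(lv a + 1) * NN k \<le> lv b * NN k" by (intro mult_right_mono) auto
  then show ?thesis using rank_range[OF a(1)] rank_range[OF a(2)] unfolding key_def
    by (simp add: algebra_simps)
qed

lemma key_le0: "a \<in> A \<Longrightarrow> a \<le> r \<Longrightarrow> key a \<le> 0"
proof -
  assume a: "a \<in> A" "a \<le> r"
  have "lv a \<le> -1" using lev_neg a by simp
  then have "lv a * NN k \<le> -1 * NN k" by (intro mult_right_mono) auto
  then show ?thesis using rank_range[OF a(1)] unfolding key_def by simp
qed

lemma key_gt0: "a \<in> A \<Longrightarrow> r < a \<Longrightarrow> 0 < key a"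
proof -
  assume a: "a \<in> A" "r < a"
  have "0 \<le> lv a" using lev_nonneg a by simp
  then have "0 \<le> lv a * NN k" by simp
  then show ?thesis using rank_range[OF a(1)] unfolding key_def by simp
qed

lemma rank_resinj: "resinj k rank"
proof (rule win_resinj)
  show "win k 0 rank" unfolding win_def
  proof
    show "\<forall>\<alpha>\<in>A. 0 < rank \<alpha> \<and> rank \<alpha> \<le> 0 + NN k" using rank_range by fastforce
    show "inj_on rank A" unfolding inj_on_def rank_def using idx_prop by (metis of_nat_eq_iff add_right_cancel)
  qed
qed

lemma key_resinj: "resinj k key"
proof -
  have "key a mod NN k = rank a mod NN k" for a unfolding key_def by simp
  then show ?thesis using rank_resinj unfolding resinj_def inj_on_def by simp
qed

lemma ppos_mono:
  assumes q: "q < q'" "q' < Suc k"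
  shows "ppos x k r (\<pi> ! q) < ppos x k r (\<pi> ! q')"
proof -
  define a where "a = \<pi> ! q"
  define b where "b = \<pi> ! q'"
  have ab: "a \<in> A" "b \<in> A" unfolding a_def b_def using pi_mem q by auto
  have R: "Rl a b" unfolding a_def b_def using Rl_nth q .
  have xa: "1 \<le> x a" "x a \<le> Suc k" "1 \<le> x b" "x b \<le> Suc k" using xA ab unfolding bij_betw_def by auto
  show ?thesis unfolding a_def[symmetric] b_def[symmetric] ppos_eq
  proof (cases "lv b < lv a")
    case True
    then have "(lv b + 1) * NN k \<le> lv a * NN k" by (intro mult_right_mono) auto
    then show "int (x a) - lv a * NN k < int (x b) - lv b * NN k" using xa by (simp add: algebra_simps)
  next
    case False
    then have "lv a = lv b" "a < b" using R unfolding Rl_def by auto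
    then have "x a < x b" using lev_eq_x[of a b] ab by simp
    then show "int (x a) - lv a * NN k < int (x b) - lv b * NN k" using \<open>lv a = lv b\<close> by simp
  qed
qed

end



lemma sinf_bound:
  assumes "z \<in> Sinf" shows "\<exists>M. \<forall>p>M. z p = p"
proof -
  have f: "finite {i. z i \<noteq> i}" using assms unfolding Sinf_def by auto
  obtain M where "\<forall>i\<in>{i. z i \<noteq> i}. i \<le> M" using finite_nat_set_iff_bounded_le f by blast
  then show ?thesis by (metis (mono_tags, lifting) leD mem_Collect_eq)
qed

lemma inv_fin:
  assumes "z \<in> Sinf" shows "finite {(p,q). 0 < p \<and> p < q \<and> z q < z p}"
proof -
  obtain M where M: "\<forall>p>M. z p = p" using sinf_bound[OF assms] by blast
  define M2 where "M2 = Max (z ` {..M})"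
  have zle: "p \<le> M \<Longrightarrow> z p \<le> M2" for p unfolding M2_def by (intro Max_ge) auto
  have "{(p,q). 0 < p \<and> p < q \<and> z q < z p} \<subseteq> {..max M M2} \<times> {..max M M2}"
  proof
    fix X assume "X \<in> {(p,q). 0 < p \<and> p < q \<and> z q < z p}"
    then obtain p q where X: "X = (p,q)" "p < q" "z q < z p" by auto
    show "X \<in> {..max M M2} \<times> {..max M M2}"
    proof (cases "q \<le> M")
      case True then show ?thesis using X by auto
    next
      case False
      then have "z q = q" using M by auto
      have "p \<le> M"
      proof (rule ccontr)
        assume "\<not> p \<le> M" then have "z p = p" using M by auto
        then show False using X \<open>z q = q\<close> by simp
      qed
      then have "z p \<le> M2" by (rule zle)
      then show ?thesis using X \<open>z q = q\<close> by auto
    qed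
  qed
  then show ?thesis by (rule finite_subset) auto
qed

lemma inv_swap_dec:
  assumes zS: "z \<in> Sinf" and ij: "0 < i" "i < j" and dec: "z j < z i"
  shows "inv_len (z \<circ> transp_nat i j) < inv_len z"
proof -
  define Sz where "Sz = {(p,q). 0 < p \<and> p < q \<and> z q < z p}"
  define Sw where "Sw = {(p,q). 0 < p \<and> p < q \<and> (z \<circ> transp_nat i j) q < (z \<circ> transp_nat i j) p}"
  define \<psi> where "\<psi> = (\<lambda>(p::nat,q::nat). if p = i then (if j < q then (j,q) else (i,q))
     else if p = j then (i,q) else if q = i then (p,j)
     else if q = j then (if p < i then (p,i) else (p,j)) else (p,q))"
  have fz: "finite Sz" using inv_fin[OF zS] unfolding Sz_def .
  have sub: "\<psi> ` Sw \<subseteq> Sz - {(i,j)}"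
  proof
    fix Y assume "Y \<in> \<psi> ` Sw"
    then obtain p q where pq: "(p,q) \<in> Sw" "Y = \<psi> (p,q)" by auto
    have c: "0 < p" "p < q" "z (transp_nat i j q) < z (transp_nat i j p)" using pq(1) unfolding Sw_def by auto
    show "Y \<in> Sz - {(i,j)}"
      using c ij dec pq(2) unfolding \<psi>_def Sz_def transp_nat_def
      by (auto split: if_splits)
  qed
  have inj: "inj_on \<psi> Sw"
  proof (rule inj_onI)
    fix X Y assume X: "X \<in> Sw" and Y: "Y \<in> Sw" and e: "\<psi> X = \<psi> Y"
    obtain p q where x: "X = (p,q)" by (cases X)
    obtain p' q' where y: "Y = (p',q')" by (cases Y)
    have c: "0 < p" "p < q" "z (transp_nat i j q) < z (transp_nat i j p)" using X x unfolding Sw_def by auto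
    have c': "0 < p'" "p' < q'" "z (transp_nat i j q') < z (transp_nat i j p')" using Y y unfolding Sw_def by auto
    show "X = Y" using c c' e x y ij dec unfolding \<psi>_def transp_nat_def
      by (auto split: if_splits)
  qed
  have "(i,j) \<in> Sz" using ij dec unfolding Sz_def by auto
  then have "card (Sz - {(i,j)}) < card Sz" by (rule card_Diff1_less[OF fz])
  moreover have "card Sw \<le> card (Sz - {(i,j)})"
    using card_inj_on_le[OF inj sub] fz by simp
  ultimately show ?thesis unfolding inv_len_def Sz_def Sw_def by simp
qed



locale chainL =
  fixes r k n :: nat and x y :: "nat \<Rightarrow> nat" and ch :: "nat \<Rightarrow> nat \<Rightarrow> nat" and a b :: "nat \<Rightarrow> nat"
  assumes r_pos: "1 \<le> r"
    and xS: "x \<in> Sinf"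
    and fix_k: "\<forall>\<alpha>>k + 1. x \<alpha> = \<alpha> \<and> y \<alpha> = \<alpha>"
    and r_le_k: "r \<le> k"
    and ch0: "ch 0 = x" and chn: "ch n = y"
    and ch_cover: "\<forall>i\<in>{1..n}. rcover r (ch (i - 1)) (ch i)"
    and ch_ab: "\<forall>i\<in>{1..n}. a i < b i \<and> ch i = transp_nat (a i) (b i) \<circ> ch (i - 1)"
begin

lemma chS: "t \<le> n \<Longrightarrow> ch t \<in> Sinf"
proof (cases t)
  case 0 then show ?thesis using xS ch0 by simp
next
  case (Suc t') assume "t \<le> n"
  then have "t \<in> {1..n}" using Suc by simp
  then show ?thesis using ch_cover unfolding rcover_def by blast
qed

lemma step:
  assumes t: "t \<in> {1..n}"
  obtains i j where "1 \<le> i" "i \<le> r" "r < j" "ch t = ch (t - 1) \<circ> transp_nat i j"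
    "inv_len (ch t) = inv_len (ch (t - 1)) + 1" "ch (t - 1) i < ch (t - 1) j"
    "a t = ch (t - 1) i" "b t = ch (t - 1) j"
proof -
  define z where "z = ch (t - 1)"
  have "t - 1 \<le> n" using t by (meson atLeastAtMost_iff diff_le_self le_trans)
  then have zS: "z \<in> Sinf" unfolding z_def by (rule chS)
  obtain i j where ij: "1 \<le> i" "i \<le> r" "r < j" "ch t = z \<circ> transp_nat i j"
      and len: "inv_len (ch t) = inv_len z + 1"
    using ch_cover t unfolding rcover_def z_def by blast
  have ab: "a t < b t" "ch t = transp_nat (a t) (b t) \<circ> z" using ch_ab t unfolding z_def by auto
  have injz: "inj z" using zS unfolding Sinf_def bij_def by auto
  have "z i \<noteq> z j" using injz ij unfolding inj_def by (metis leD order.trans le_refl)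
  moreover have "\<not> z j < z i"
  proof
    assume "z j < z i"
    then have "inv_len (z \<circ> transp_nat i j) < inv_len z" using inv_swap_dec[OF zS] ij by simp
    then show False using len ij by simp
  qed
  ultimately have lt: "z i < z j" by simp
  have "(z \<circ> transp_nat i j) i = (transp_nat (a t) (b t) \<circ> z) i" using ij(4) ab(2) by simp
  then have e: "z j = transp_nat (a t) (b t) (z i)" unfolding transp_nat_def by simp
  have "z i = a t \<and> z j = b t"
  proof (cases "z i = a t")
    case True then show ?thesis using e unfolding transp_nat_def by simp
  next
    case False
    show ?thesis
    proof (cases "z i = b t")
      case True
      then have "z j = a t" using e unfolding transp_nat_def by simp
      then show ?thesis using True lt ab(1) by simp
    next
      case F2: False
      then have "z j = z i" using e False unfolding transp_nat_def by simp
      then show ?thesis using lt by simp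
    qed
  qed
  then show ?thesis using ij len lt unfolding z_def by (intro that[of i j]) auto
qed

lemma mono_pos:
  assumes "p > r" shows "t' \<le> n \<Longrightarrow> t \<le> t' \<Longrightarrow> ch t' p \<le> ch t p"
proof (induction t')
  case 0 then show ?case by simp
next
  case (Suc t')
  show ?case
  proof (cases "t = Suc t'")
    case True then show ?thesis by simp
  next
    case False
    then have le: "ch t' p \<le> ch t p" using Suc by simp
    have tt: "Suc t' \<in> {1..n}" using Suc by simp
    obtain i j where ij: "1 \<le> i" "i \<le> r" "r < j" "ch (Suc t') = ch t' \<circ> transp_nat i j"
      "ch t' i < ch t' j"
      using step[OF tt] by (metis diff_Suc_1)
    have "ch (Suc t') p \<le> ch t' p"
      using ij assms unfolding transp_nat_def by (cases "p = j") auto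
    then show ?thesis using le by simp
  qed
qed

lemma fixes_above: "t \<le> n \<Longrightarrow> p > Suc k \<Longrightarrow> ch t p = p"
proof -
  assume t: "t \<le> n" and p: "p > Suc k"
  have pr: "p > r" using p r_le_k by simp
  have "ch t p \<le> ch 0 p" using mono_pos[OF pr t] by simp
  moreover have "ch n p \<le> ch t p" using mono_pos[OF pr _ t] by simp
  ultimately show ?thesis using fix_k p ch0 chn by fastforce
qed

lemma perm_A:
  assumes t: "t \<le> n"
  shows "bij_betw (ch t) {1..Suc k} {1..Suc k}"
proof -
  define z where "z = ch t"
  have zS: "z \<in> Sinf" unfolding z_def using chS t by simp
  have injz: "inj z" and z0: "z 0 = 0" using zS unfolding Sinf_def bij_def by auto
  have fx: "p > Suc k \<Longrightarrow> z p = p" for p unfolding z_def using fixes_above t by blast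
  have "z ` {1..Suc k} \<subseteq> {1..Suc k}"
  proof
    fix v assume "v \<in> z ` {1..Suc k}"
    then obtain \<alpha> where al: "\<alpha> \<in> {1..Suc k}" "v = z \<alpha>" by auto
    have "v \<noteq> 0"
    proof
      assume "v = 0" then have "z \<alpha> = z 0" using al z0 by simp
      then have "\<alpha> = 0" using injz unfolding inj_def by blast
      then show False using al by simp
    qed
    moreover have "\<not> v > Suc k"
    proof
      assume "v > Suc k"
      then have "z v = v" using fx by blast
      then have "v = \<alpha>" using al injz unfolding inj_def by metis
      then show False using al \<open>v > Suc k\<close> by simp
    qed
    ultimately show "v \<in> {1..Suc k}" by auto
  qed
  moreover have "inj_on z {1..Suc k}" using injz by (simp add: inj_on_def inj_def)
  ultimately show ?thesis unfolding z_def
    by (simp add: bij_betw_def card_image card_subset_eq)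
qed

lemma inv_len_A:
  assumes t: "t \<le> n"
  shows "inv_len (ch t) = card {(\<alpha>,\<beta>). \<alpha> \<in> {1..Suc k} \<and> \<beta> \<in> {1..Suc k} \<and> \<beta> < \<alpha> \<and> ch t \<alpha> < ch t \<beta>}"
proof -
  define z where "z = ch t"
  have bb: "bij_betw z {1..Suc k} {1..Suc k}" unfolding z_def using perm_A t .
  have fx: "p > Suc k \<Longrightarrow> z p = p" for p unfolding z_def using fixes_above t by blast
  have "{(p,q). 0 < p \<and> p < q \<and> z q < z p} = {(p,q). p \<in> {1..Suc k} \<and> q \<in> {1..Suc k} \<and> p < q \<and> z q < z p}"
  proof (safe)
    fix p q assume h: "0 < p" "p < q" "z q < z p"
    show qA: "q \<in> {1..Suc k}"
    proof (rule ccontr)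
      assume "q \<notin> {1..Suc k}"
      then have q: "q > Suc k" using h by auto
      then have "z q = q" using fx by blast
      show False
      proof (cases "p \<le> Suc k")
        case True
        then have "z p \<in> {1..Suc k}" using bb h unfolding bij_betw_def by auto
        then show False using h \<open>z q = q\<close> q by simp
      next
        case False then have "z p = p" using fx by simp
        then show False using h \<open>z q = q\<close> by simp
      qed
    qed
    then show "p \<in> {1..Suc k}" using h by auto
  qed auto
  also have "\<dots> = (\<lambda>(\<alpha>,\<beta>). (\<beta>,\<alpha>)) ` {(\<alpha>,\<beta>). \<alpha> \<in> {1..Suc k} \<and> \<beta> \<in> {1..Suc k} \<and> \<beta> < \<alpha> \<and> z \<alpha> < z \<beta>}"
    by auto
  finally have e: "{(p,q). 0 < p \<and> p < q \<and> z q < z p} = (\<lambda>(\<alpha>,\<beta>). (\<beta>,\<alpha>)) ` {(\<alpha>,\<beta>). \<alpha> \<in> {1..Suc k} \<and> \<beta> \<in> {1..Suc k} \<and> \<beta> < \<alpha> \<and> z \<alpha> < z \<beta>}" .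
  have "inj_on (\<lambda>(\<alpha>::nat,\<beta>::nat). (\<beta>,\<alpha>)) X" for X by (auto simp: inj_on_def)
  then show ?thesis unfolding inv_len_def z_def[symmetric] e by (simp add: card_image)
qed

lemma step_range:
  assumes t: "t \<in> {1..n}"
  obtains i j where "1 \<le> i" "i \<le> r" "r < j" "j \<le> Suc k" "ch t = ch (t - 1) \<circ> transp_nat i j"
    "inv_len (ch t) = inv_len (ch (t - 1)) + 1" "ch (t - 1) i < ch (t - 1) j"
    "a t = ch (t - 1) i" "b t = ch (t - 1) j"
proof -
  obtain i j where ij: "1 \<le> i" "i \<le> r" "r < j" "ch t = ch (t - 1) \<circ> transp_nat i j"
    "inv_len (ch t) = inv_len (ch (t - 1)) + 1" "ch (t - 1) i < ch (t - 1) j"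
    "a t = ch (t - 1) i" "b t = ch (t - 1) j" using step[OF t] by blast
  have "j \<le> Suc k"
  proof (rule ccontr)
    assume "\<not> j \<le> Suc k"
    then have "ch t j = j" "ch (t - 1) j = j" using fixes_above t by auto
    moreover have "j \<noteq> i" using ij(2,3) by simp
    ultimately have "ch (t - 1) i = ch (t - 1) j" using ij(4) unfolding transp_nat_def by (simp add: fun_eq_iff)
    then show False using ij(6) by simp
  qed
  then show ?thesis using ij by (intro that[of i j]) auto
qed

end



lemma res_ne:
  fixes p q s m :: int
  assumes "1 \<le> p" "p \<le> NN k" "1 \<le> q" "q \<le> NN k" "p \<noteq> q"
  shows "(p - s + m * NN k) mod NN k \<noteq> (q - s) mod NN k"
proof
  assume e: "(p - s + m * NN k) mod NN k = (q - s) mod NN k"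
  have e2: "(p - s) mod NN k = (q - s) mod NN k" using e by simp
  show False
  proof (cases "p < q")
    case True
    have "((p - s) + (q - p)) mod NN k = (p - s) mod NN k" using e2 by simp
    then show False using mod_shift_eq[of "p - s" "q - p" k] True assms by simp
  next
    case False
    then have "q < p" using assms by simp
    have "((q - s) + (p - q)) mod NN k = (q - s) mod NN k" using e2 by simp
    then show False using mod_shift_eq[of "q - s" "p - q" k] \<open>q < p\<close> assms by simp
  qed
qed

locale mainL = chainL +
  fixes u' u :: "int \<Rightarrow> int" and s :: int
  assumes u'_def: "\<forall>q<k + 1. \<forall>m::int.
        u' (ppos x k r (order_list x k r ! q) + m * (int k + 1)) = int q + 1 + m * (int k + 1)"
    and s_def: "(\<Sum>i = 1..int k + 1. u' i) = int ((k + 2) choose 2) - s * (int k + 1)"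
    and u_def: "\<forall>i. u i = u' (i + s)"
begin

lemma xA: "bij_betw x {1..Suc k} {1..Suc k}" using perm_A[of 0] ch0 by simp

sublocale C: constrL x k r using xA r_pos r_le_k by unfold_locales

lemma k1: "1 \<le> k" using r_pos r_le_k by simp

lemma win_z: "bij_betw z {1..Suc k} {1..Suc k} \<Longrightarrow> win k (- c) (\<lambda>\<alpha>. int (z \<alpha>) - c)"
proof -
  assume bb: "bij_betw z {1..Suc k} {1..Suc k}"
  have m: "\<alpha> \<in> {1..Suc k} \<Longrightarrow> z \<alpha> \<in> {1..Suc k}" for \<alpha> using bb unfolding bij_betw_def by blast
  have "inj_on z {1..Suc k}" using bb unfolding bij_betw_def by blast
  then have "inj_on (\<lambda>\<alpha>. int (z \<alpha>) - c) {1..Suc k}" unfolding inj_on_def by simp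
  moreover have "\<forall>\<alpha>\<in>{1..Suc k}. - c < int (z \<alpha>) - c \<and> int (z \<alpha>) - c \<le> - c + NN k"
  proof
    fix \<alpha> assume "\<alpha> \<in> {1..Suc k}"
    then have "1 \<le> z \<alpha>" "z \<alpha> \<le> Suc k" using m by auto
    then show "- c < int (z \<alpha>) - c \<and> int (z \<alpha>) - c \<le> - c + NN k" by simp
  qed
  ultimately show ?thesis unfolding win_def by blast
qed

lemma U1: "Rep k u' (\<lambda>\<alpha>. int (x \<alpha>)) C.key"
  unfolding Rep_def
proof (intro ballI allI)
  fix \<alpha> m assume a: "\<alpha> \<in> {1..Suc k}"
  define q where "q = C.idx \<alpha>"
  have q: "q < Suc k" "order_list x k r ! q = \<alpha>" using C.idx_prop[OF a] unfolding q_def by auto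
  have "u' (ppos x k r (order_list x k r ! q) + (m + C.lv \<alpha>) * (int k + 1)) = int q + 1 + (m + C.lv \<alpha>) * (int k + 1)"
    using u'_def q(1) by simp
  moreover have "ppos x k r (order_list x k r ! q) + (m + C.lv \<alpha>) * (int k + 1) = int (x \<alpha>) + m * NN k"
    using q(2) C.ppos_eq[of \<alpha>] by (simp add: algebra_simps)
  ultimately show "u' (int (x \<alpha>) + m * NN k) = C.key \<alpha> + m * NN k"
    unfolding C.key_def C.rank_def q_def by (simp add: algebra_simps)
qed

lemma U2: "Rep k u (\<lambda>\<alpha>. int (x \<alpha>) - s) C.key"
  unfolding Rep_def
proof (intro ballI allI)
  fix \<alpha> m assume a: "\<alpha> \<in> {1..Suc k}"
  have "u (int (x \<alpha>) - s + m * NN k) = u' (int (x \<alpha>) + m * NN k)" using u_def by simp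
  then show "u (int (x \<alpha>) - s + m * NN k) = C.key \<alpha> + m * NN k" using RepD[OF U1 a] by simp
qed

lemma sum_perm: "bij_betw z {1..Suc k} {1..Suc k} \<Longrightarrow> (\<Sum>\<alpha> = 1..Suc k. int (z \<alpha>)) = (\<Sum>\<alpha> = 1..Suc k. int \<alpha>)"
  using sum.reindex_bij_betw[of z "{1..Suc k}" "{1..Suc k}" int] by simp

lemma sum_u: "(\<Sum>i = 1..NN k. u i) = int ((k + 2) choose 2)"
proof -
  have w0: "win k 0 (\<lambda>\<alpha>. int (x \<alpha>))" using win_z[OF xA, of 0] by simp
  have s1: "(\<Sum>i = 1..NN k. u' i - i) = (\<Sum>\<alpha> = 1..Suc k. C.key \<alpha> - int (x \<alpha>))" by (rule Rep_sum[OF U1 w0])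
  have s2: "(\<Sum>i = 1..NN k. u i - i) = (\<Sum>\<alpha> = 1..Suc k. C.key \<alpha> - (int (x \<alpha>) - s))" by (rule Rep_sum[OF U2 win_z[OF xA]])
  have "(\<Sum>\<alpha> = 1..Suc k. C.key \<alpha> - (int (x \<alpha>) - s)) = (\<Sum>\<alpha> = 1..Suc k. (C.key \<alpha> - int (x \<alpha>)) + s)"
    by (simp add: algebra_simps)
  also have "\<dots> = (\<Sum>\<alpha> = 1..Suc k. C.key \<alpha> - int (x \<alpha>)) + NN k * s" by (simp add: sum.distrib)
  finally have "(\<Sum>i = 1..NN k. u i - i) = (\<Sum>i = 1..NN k. u' i - i) + NN k * s" using s1 s2 by simp
  then have "(\<Sum>i = 1..NN k. u i) = (\<Sum>i = 1..NN k. u' i) + NN k * s" by (simp add: sum_subtractf)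
  then show ?thesis using s_def by (simp add: algebra_simps)
qed

lemma chain_facts:
  assumes t: "t \<le> n" and R: "Rep k f (\<lambda>\<alpha>. int (ch t \<alpha>) - s) C.key"
  shows "f \<in> affW k" "affinv k f = Cc k C.key + inv_len (ch t)"
proof -
  have bb: "bij_betw (ch t) {1..Suc k} {1..Suc k}" using perm_A t .
  have W: "win k (- s) (\<lambda>\<alpha>. int (ch t \<alpha>) - s)" using win_z[OF bb] .
  have B: "bij f" using Rep_bij[OF R win_resinj[OF W] C.key_resinj] .
  have P: "per k f" unfolding per_def using Rep_per[OF R win_resinj[OF W]] by blast
  have s1: "(\<Sum>i = 1..NN k. f i - i) = (\<Sum>\<alpha> = 1..Suc k. C.key \<alpha> - (int (ch t \<alpha>) - s))" by (rule Rep_sum[OF R W])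
  have s2: "(\<Sum>i = 1..NN k. u i - i) = (\<Sum>\<alpha> = 1..Suc k. C.key \<alpha> - (int (x \<alpha>) - s))" by (rule Rep_sum[OF U2 win_z[OF xA]])
  have "(\<Sum>\<alpha> = 1..Suc k. C.key \<alpha> - (int (ch t \<alpha>) - s)) = (\<Sum>\<alpha> = 1..Suc k. (C.key \<alpha> + s) - int (ch t \<alpha>))"
    by (rule sum.cong) auto
  also have "\<dots> = (\<Sum>\<alpha> = 1..Suc k. C.key \<alpha> + s) - (\<Sum>\<alpha> = 1..Suc k. int (ch t \<alpha>))"
    by (rule sum_subtractf)
  also have "\<dots> = (\<Sum>\<alpha> = 1..Suc k. C.key \<alpha> + s) - (\<Sum>\<alpha> = 1..Suc k. int (x \<alpha>))"
    using sum_perm[OF bb] sum_perm[OF xA] by simp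
  also have "\<dots> = (\<Sum>\<alpha> = 1..Suc k. (C.key \<alpha> + s) - int (x \<alpha>))"
    by (rule sum_subtractf[symmetric])
  also have "\<dots> = (\<Sum>\<alpha> = 1..Suc k. C.key \<alpha> - (int (x \<alpha>) - s))"
    by (rule sum.cong) auto
  finally have "(\<Sum>i = 1..NN k. f i - i) = (\<Sum>i = 1..NN k. u i - i)" using s1 s2 by simp
  then have "(\<Sum>i = 1..NN k. f i) = (\<Sum>i = 1..NN k. u i)" by (simp add: sum_subtractf)
  then show "f \<in> affW k" using affW_iff B P sum_u by simp
  have "affinv k f = Cc k C.key + cross k (\<lambda>\<alpha>. int (ch t \<alpha>) - s) C.key"
    by (rule affinv_formula[OF R W C.key_resinj])
  moreover have "cross k (\<lambda>\<alpha>. int (ch t \<alpha>) - s) C.key = inv_len (ch t)"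
  proof -
    have "{(\<alpha>,\<beta>). \<alpha> \<in> {1..Suc k} \<and> \<beta> \<in> {1..Suc k} \<and> int (ch t \<alpha>) - s < int (ch t \<beta>) - s \<and> C.key \<beta> < C.key \<alpha>}
        = {(\<alpha>,\<beta>). \<alpha> \<in> {1..Suc k} \<and> \<beta> \<in> {1..Suc k} \<and> \<beta> < \<alpha> \<and> ch t \<alpha> < ch t \<beta>}"
    proof (safe)
      fix a b assume h: "a \<in> {1..Suc k}" "b \<in> {1..Suc k}" "C.key b < C.key a"
      show "b < a"
      proof (rule ccontr)
        assume "\<not> b < a"
        then have "a \<le> b" by simp
        then have "C.key a \<le> C.key b" using C.key_mono[of a b] h by (cases "a = b") auto
        then show False using h by simp
      qed
    next
      fix a b assume h: "a \<in> {1..Suc k}" "b \<in> {1..Suc k}" "b < a"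
      show "C.key b < C.key a" using C.key_mono[OF h(2,1,3)] .
    qed auto
    then show ?thesis unfolding cross_def inv_len_A[OF t] by simp
  qed
  ultimately show "affinv k f = Cc k C.key + inv_len (ch t)" by simp
qed

end



context mainL begin

lemma u_affW: "u \<in> affW k"
  using chain_facts(1)[of 0 u] U2 ch0 by simp

lemma u_W0: "u \<in> affW0 k"
proof -
  have A: "u \<in> affW k" by (rule u_affW)
  then have B: "bij u" using affW_iff by blast
  have val: "q < Suc k \<Longrightarrow> u (ppos x k r (order_list x k r ! q) - s) = int q + 1" for q
  proof -
    assume q: "q < Suc k"
    have q1: "q < k + 1" using q by simp
    have "u' (ppos x k r (order_list x k r ! q) + 0 * (int k + 1)) = int q + 1 + 0 * (int k + 1)"
      using u'_def[rule_format, OF q1] by blast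
    then show ?thesis using u_def by simp
  qed
  have invv: "q < Suc k \<Longrightarrow> inv u (int q + 1) = ppos x k r (order_list x k r ! q) - s" for q
    using val B by (metis bij_def inv_f_f)
  show ?thesis unfolding affW0_def
  proof (intro CollectI conjI allI impI A)
    fix i j :: int assume h: "1 \<le> i \<and> i < j \<and> j \<le> int k + 1"
    define q where "q = nat (i - 1)"
    define q' where "q' = nat (j - 1)"
    have qq: "i = int q + 1" "j = int q' + 1" "q < q'" "q' < Suc k" using h unfolding q_def q'_def by auto
    show "inv u i < inv u j" unfolding qq(1,2) using invv[of q] invv[of q'] qq C.ppos_mono[OF qq(3,4)] by simp
  qed
qed

lemma R_step:
  assumes t: "Suc t \<in> {1..n}" and R: "Rep k f (\<lambda>\<alpha>. int (ch t \<alpha>) - s) C.key"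
  shows "Rep k (f \<circ> aff_t k (int (a (Suc t)) - s) (int (b (Suc t)) - s)) (\<lambda>\<alpha>. int (ch (Suc t) \<alpha>) - s) C.key"
    and "tmul k (Some f) (int (a (Suc t)) - s) (int (b (Suc t)) - s) = Some (f \<circ> aff_t k (int (a (Suc t)) - s) (int (b (Suc t)) - s))"
proof -
  obtain i j where ij: "1 \<le> i" "i \<le> r" "r < j" "j \<le> Suc k" "ch (Suc t) = ch t \<circ> transp_nat i j"
    "inv_len (ch (Suc t)) = inv_len (ch t) + 1" "ch t i < ch t j"
    "a (Suc t) = ch t i" "b (Suc t) = ch t j" using step_range[OF t] by auto
  have tn: "t \<le> n" "Suc t \<le> n" using t by auto
  have bb: "bij_betw (ch t) {1..Suc k} {1..Suc k}" using perm_A tn(1) .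
  have iA: "i \<in> {1..Suc k}" "j \<in> {1..Suc k}" using ij r_le_k by auto
  define A0 where "A0 = a (Suc t)"
  define B0 where "B0 = b (Suc t)"
  have AB: "A0 \<in> {1..Suc k}" "B0 \<in> {1..Suc k}" "A0 < B0"
    using bb iA ij unfolding A0_def B0_def bij_betw_def by auto
  have zz: "ch (Suc t) = transp_nat A0 B0 \<circ> ch t" using ch_ab t unfolding A0_def B0_def by auto
  define d where "d = int B0 - int A0"
  have d: "0 < d" "d < NN k" using AB unfolding d_def by auto
  define a' where "a' = int A0 - s"
  define b' where "b' = int B0 - s"
  have ne: "(a' + m * NN k) mod NN k \<noteq> b' mod NN k" "(b' + m * NN k) mod NN k \<noteq> a' mod NN k" for m
    unfolding a'_def b'_def using res_ne[of "int A0" k "int B0" s m] res_ne[of "int B0" k "int A0" s m] AB by auto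
  have tt: "aff_t k a' b' (int (ch (Suc t) \<alpha>) - s + m * NN k) = int (ch t \<alpha>) - s + m * NN k"
    if al: "\<alpha> \<in> {1..Suc k}" for \<alpha> m
  proof -
    have v: "ch t \<alpha> \<in> {1..Suc k}" using bb al unfolding bij_betw_def by auto
    consider "ch t \<alpha> = A0" | "ch t \<alpha> = B0" | "ch t \<alpha> \<noteq> A0" "ch t \<alpha> \<noteq> B0" by blast
    then show ?thesis
    proof cases
      case 1
      then have "ch (Suc t) \<alpha> = B0" using zz unfolding transp_nat_def by simp
      then have "int (ch (Suc t) \<alpha>) - s + m * NN k = b' + m * NN k" unfolding b'_def by simp
      then show ?thesis using ne(2)[of m] 1 unfolding aff_t_def a'_def b'_def by simp
    next
      case 2
      then have "ch (Suc t) \<alpha> = A0" using zz AB unfolding transp_nat_def by simp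
      then have "int (ch (Suc t) \<alpha>) - s + m * NN k = a' + m * NN k" unfolding a'_def by simp
      then show ?thesis using 2 unfolding aff_t_def a'_def b'_def by simp
    next
      case 3
      then have e: "ch (Suc t) \<alpha> = ch t \<alpha>" using zz unfolding transp_nat_def by simp
      have "(int (ch t \<alpha>) - s + m * NN k) mod NN k \<noteq> (int A0 - s) mod NN k"
        using res_ne[of "int (ch t \<alpha>)" k "int A0" s m] v AB 3 by simp
      moreover have "(int (ch t \<alpha>) - s + m * NN k) mod NN k \<noteq> (int B0 - s) mod NN k"
        using res_ne[of "int (ch t \<alpha>)" k "int B0" s m] v AB 3 by simp
      ultimately show ?thesis using e unfolding aff_t_def a'_def b'_def by simp
    qed
  qed
  show R': "Rep k (f \<circ> aff_t k (int (a (Suc t)) - s) (int (b (Suc t)) - s)) (\<lambda>\<alpha>. int (ch (Suc t) \<alpha>) - s) C.key"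
    unfolding Rep_def
  proof (intro ballI allI)
    fix \<alpha> m assume al: "\<alpha> \<in> {1..Suc k}"
    show "(f \<circ> aff_t k (int (a (Suc t)) - s) (int (b (Suc t)) - s)) (int (ch (Suc t) \<alpha>) - s + m * NN k) = C.key \<alpha> + m * NN k"
      using tt[OF al, of m] RepD[OF R al, of m] unfolding a'_def b'_def A0_def B0_def by simp
  qed
  have F1: "f \<in> affW k" "affinv k f = Cc k C.key + inv_len (ch t)" using chain_facts[OF tn(1) R] by auto
  have F2: "f \<circ> aff_t k a' b' \<in> affW k" "affinv k (f \<circ> aff_t k a' b') = Cc k C.key + inv_len (ch (Suc t))"
    using chain_facts[OF tn(2) R'] unfolding a'_def b'_def A0_def B0_def by auto
  have len: "aff_len k (f \<circ> aff_t k a' b') = aff_len k f + 1"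
    using aff_len_eq[OF k1 F1(1)] aff_len_eq[OF k1 F2(1)] F1(2) F2(2) ij(6) by simp
  have fa: "f a' = C.key i" using RepD[OF R iA(1), of 0] ij(8) unfolding a'_def A0_def by simp
  have fb: "f b' = C.key j" using RepD[OF R iA(2), of 0] ij(9) unfolding b'_def B0_def by simp
  have c1: "f a' \<le> 0" using fa C.key_le0[OF iA(1) ij(2)] by simp
  have c2: "0 < f b'" using fb C.key_gt0[OF iA(2) ij(3)] by simp
  have c3: "a' < b'" "b' - a' \<le> int k" using AB unfolding a'_def b'_def by auto
  show "tmul k (Some f) (int (a (Suc t)) - s) (int (b (Suc t)) - s) = Some (f \<circ> aff_t k (int (a (Suc t)) - s) (int (b (Suc t)) - s))"
    using len c1 c2 c3 unfolding tmul_def a'_def b'_def A0_def B0_def by simp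
qed

lemma chain_ok:
  "t \<le> n \<Longrightarrow> \<exists>f. foldl (\<lambda>acc (a, b). tmul k acc a b) (Some u)
      (zip (map (\<lambda>i. int (a i) - s) [1..<t + 1]) (map (\<lambda>i. int (b i) - s) [1..<t + 1])) = Some f
    \<and> Rep k f (\<lambda>\<alpha>. int (ch t \<alpha>) - s) C.key"
proof (induction t)
  case 0 then show ?case using U2 ch0 by simp
next
  case (Suc t)
  then obtain f where f: "foldl (\<lambda>acc (a, b). tmul k acc a b) (Some u)
      (zip (map (\<lambda>i. int (a i) - s) [1..<t + 1]) (map (\<lambda>i. int (b i) - s) [1..<t + 1])) = Some f"
    "Rep k f (\<lambda>\<alpha>. int (ch t \<alpha>) - s) C.key" by auto
  have t: "Suc t \<in> {1..n}" using Suc by simp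
  have up: "[1..<Suc t + 1] = [1..<t + 1] @ [Suc t]" by simp
  have "foldl (\<lambda>acc (a, b). tmul k acc a b) (Some u)
      (zip (map (\<lambda>i. int (a i) - s) [1..<Suc t + 1]) (map (\<lambda>i. int (b i) - s) [1..<Suc t + 1]))
    = tmul k (Some f) (int (a (Suc t)) - s) (int (b (Suc t)) - s)"
    unfolding up using f(1) by simp
  then show ?case using R_step[OF t f(2)] by auto
qed

end



theorem mainTheorem3:
  fixes r k n :: nat and x y :: "nat \<Rightarrow> nat"
    and ch :: "nat \<Rightarrow> nat \<Rightarrow> nat" and a b :: "nat \<Rightarrow> nat"
    and u' u :: "int \<Rightarrow> int" and s :: int
  assumes r_pos: "1 \<le> r"
    and xS: "x \<in> Sinf" and yS: "y \<in> Sinf"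
    and nonempty: "rle r x y"
    and fix_k: "\<forall>\<alpha>>k + 1. x \<alpha> = \<alpha> \<and> y \<alpha> = \<alpha>"
    and r_le_k: "r \<le> k"
    and u'_def: "\<forall>q<k + 1. \<forall>m::int.
        u' (ppos x k r (order_list x k r ! q) + m * (int k + 1)) = int q + 1 + m * (int k + 1)"
    and s_def: "(\<Sum>i = 1..int k + 1. u' i) = int ((k + 2) choose 2) - s * (int k + 1)"
    and u_def: "\<forall>i. u i = u' (i + s)"
    and ch0: "ch 0 = x" and chn: "ch n = y"
    and ch_cover: "\<forall>i\<in>{1..n}. rcover r (ch (i - 1)) (ch i)"
    and ch_ab: "\<forall>i\<in>{1..n}. a i < b i \<and> ch i = transp_nat (a i) (b i) \<circ> ch (i - 1)"
  shows "u \<in> affW0 k \<and>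
         apply_chain k u (map (\<lambda>i. int (a i) - s) [1..<n + 1]) (map (\<lambda>i. int (b i) - s) [1..<n + 1]) \<noteq> None"
  proof -
  interpret mainL r k n x y ch a b u' u s
    by unfold_locales (use assms in auto)
  show ?thesis using u_W0 chain_ok[of n] unfolding apply_chain_def by auto
qed

end
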